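(* Let $0<\varepsilon<1$, let $n\ge1$ and $m\ge1$ be integers, let $A=(a_{pq})$ be a real $n\times n$ matrix and $j\in\{1,\dots,n\}$ with $a_{1j}>0$. Suppose $\lambda>0$ is a simple eigenvalue of $A$ with $A\mathbf u=\lambda\mathbf u$ and $\mathbf v^TA=\lambda\mathbf v^T$ for some entrywise positive $\mathbf u,\mathbf v\in\mathbb R^n$. Let $k\in\{1,\dots,n\}$ be such that $c:=a_{1j}v_1+\sum_{i=1}^{n-k}a_{k+i,j}v_{k+i}>0$ (for $k=n$ this means $a_{1j}>0$). Let $E=\{(m+1,m+j)\}\cup\{(m+k+1,m+j),\dots,(m+n,m+j)\}$. In each part $B=(b_{pq})$ is a real matrix of order $m+n$ whose entries with $p,q\in\{m+1,\dots,m+n\}$ and $(p,q)\notin E$ equal $a_{p-m,q-m}$; in all parts $w_i=u_j$ for $1\le i\le m$, $w_i=u_{i-m}$ and $z_i=v_{i-m}$ for $m+1\le i\le m+n$. Then: 1. For every $s\in\{1,\dots,m\}$, let the remaining entries of $B$ be: $\lambda$ at the positions $(m,m+j),(1,2),(2,3),\dots,(m-1,m)$; $a_{1j}$ at $(m+1,1)$; $a_{p-m,j}$ at $(p,s)$ for $p\in\{m+k+1,\dots,m+n\}$; $0$ elsewhere. Then $\lambda$ is a simple eigenvalue of $B$, $B\mathbf w=\lambda\mathbf w$ and $\mathbf z^TB=\lambda\mathbf z^T$ where $z_i=\frac{a_{1j}v_1}{\lambda}$ for $1\le i\le s-1$ and $z_i=\frac{c}{\lambda}$ for $s\le i\le m$;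 consequently $B$ is algebraically positive. 2. For every $s\in\{1,\dots,m-1\}$ and $t\in\{1,\dots,m\}\setminus\{s+1\}$, let the remaining entries of $B$ be: $\lambda$ at the positions in $(\{(m,m+j)\}\cup\{(1,2),\dots,(m-1,m)\})\setminus\{(s,s+1)\}$; $\varepsilon\lambda$ at $(s,s+1)$; $a_{1j}$ at $(m+1,1)$; $(1-\varepsilon)\lambda$ at $(s,t)$; $a_{p-m,j}$ at $(p,t)$ for $p\in\{m+k+1,\dots,m+n\}$; $0$ elsewhere. Then $\lambda$ is a simple eigenvalue of $B$ with $B\mathbf w=\lambda\mathbf w$, $\mathbf z^TB=\lambda\mathbf z^T$, and $B$ is algebraically positive, where: if $t\le s$, $z_i=\frac{a_{1j}v_1}{\lambda}$ for $1\le i\le t-1$, $z_i=\frac{c}{\varepsilon\lambda}$ for $t\le i\le s$, $z_i=\frac{c}{\lambda}$ for $s+1\le i\le m$; if $t\ge s+2$, $z_i=\frac{a_{1j}v_1}{\lambda}$ for $1\le i\le s$, $z_i=\frac{\varepsilon a_{1j}v_1}{\lambda}$ for $s+1\le i\le t-1$, $z_i=\frac{c}{\lambda}$ for $t\le i\le m$. Further, $b_{st}z_s+\sum_{i=1}^{n-k}b_{m+k+i,t}z_{m+k+i}$ equals $\frac{c}{\varepsilon}-a_{1j}v_1$ if $t\le s$ and equals $c-\varepsilon a_{1j}v_1$ if $t\ge s+2$, and this quantity is positive for a suitable choice of $\varepsilon\in(0,1)$. 3. For every $t\in\{1,\dots,m\}$, let the remaining entries of $B$ be: $\lambda$ at $(1,2),\dots,(m-1,m)$;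 $\varepsilon\lambda$ at $(m,m+j)$; $a_{1j}$ at $(m+1,1)$; $(1-\varepsilon)\lambda$ at $(m,t)$; $a_{p-m,j}$ at $(p,t)$ for $p\in\{m+k+1,\dots,m+n\}$; $0$ elsewhere. Then $\lambda$ is a simple eigenvalue of $B$, $B\mathbf w=\lambda\mathbf w$ and $\mathbf z^TB=\lambda\mathbf z^T$ where $z_i=\frac{a_{1j}v_1}{\lambda}$ for $1\le i\le t-1$ and $z_i=\frac{c}{\varepsilon\lambda}$ for $t\le i\le m$; consequently $B$ is algebraically positive. Further, $b_{mt}z_m+\sum_{i=1}^{n-k}b_{m+k+i,t}z_{m+k+i}=\frac{c}{\varepsilon}-a_{1j}v_1$, and this is positive for a suitable choice of $\varepsilon\in(0,1)$.
   Context: A real square matrix $M$ is algebraically positive if there is a real polynomial $f$ such that every entry of $f(M)$ is positive. A simple eigenvalue is one of algebraic multiplicity one. Index ranges of the form $a\le i\le b$ with $a>b$ are empty. *)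

theory Defs
  imports "Jordan_Normal_Form.Jordan_Normal_Form"
begin

(* Conventions: matrices are JNF matrices ('a mat, 0-indexed). The paper's 1-based
   entry a_{pq} is  A $$ (p-1, q-1), and vector entry u_i is  u $ (i-1).
   The "tp" functions below take the paper's 1-based indices (p,q). *)

definition poly_mat :: "real poly \<Rightarrow> real mat \<Rightarrow> real mat" where
  "poly_mat f M = mat (dim_row M) (dim_row M)
     (\<lambda>(i,j). \<Sum>d\<le>degree f. coeff f d * (M ^\<^sub>m d) $$ (i,j))"

definition algebraically_positive :: "real mat \<Rightarrow> bool" where
  "algebraically_positive M \<longleftrightarrow>
     (\<exists>f. \<forall>i<dim_row M. \<forall>j<dim_row M. poly_mat f M $$ (i,j) > 0)"

definition simple_eigenvalue :: "real mat \<Rightarrow> real \<Rightarrow> bool" where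
  "simple_eigenvalue M l \<longleftrightarrow> order l (char_poly M) = 1"

(* the exceptional set E (1-based indices) *)
definition inE :: "nat \<Rightarrow> nat \<Rightarrow> nat \<Rightarrow> nat \<Rightarrow> nat \<Rightarrow> nat \<Rightarrow> bool" where
  "inE m n j k p q \<longleftrightarrow> q = m + j \<and> (p = m + 1 \<or> (m + k + 1 \<le> p \<and> p \<le> m + n))"

definition mkB :: "real mat \<Rightarrow> nat \<Rightarrow> nat \<Rightarrow> nat \<Rightarrow> nat \<Rightarrow> (nat \<Rightarrow> nat \<Rightarrow> real) \<Rightarrow> real mat" where
  "mkB A m n j k tp = mat (m + n) (m + n) (\<lambda>(p0,q0).
     let p = p0 + 1; q = q0 + 1 in
     if m < p \<and> m < q \<and> \<not> inE m n j k p q then A $$ (p - m - 1, q - m - 1) else tp p q)"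

definition top1 :: "real mat \<Rightarrow> real \<Rightarrow> nat \<Rightarrow> nat \<Rightarrow> nat \<Rightarrow> nat \<Rightarrow> nat \<Rightarrow> nat \<Rightarrow> nat \<Rightarrow> real" where
  "top1 A l m n j k s p q =
     (if (p,q) = (m, m + j) \<or> (q = p + 1 \<and> 1 \<le> p \<and> p \<le> m - 1) then l
      else if (p,q) = (m + 1, 1) then A $$ (0, j - 1)
      else if q = s \<and> m + k + 1 \<le> p \<and> p \<le> m + n then A $$ (p - m - 1, j - 1)
      else 0)"

definition top2 :: "real mat \<Rightarrow> real \<Rightarrow> real \<Rightarrow> nat \<Rightarrow> nat \<Rightarrow> nat \<Rightarrow> nat \<Rightarrow> nat \<Rightarrow> nat \<Rightarrow> nat \<Rightarrow> nat \<Rightarrow> real" where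
  "top2 A l eps m n j k s t p q =
     (if (p,q) = (s, s + 1) then eps * l
      else if (p,q) = (m, m + j) \<or> (q = p + 1 \<and> 1 \<le> p \<and> p \<le> m - 1) then l
      else if (p,q) = (m + 1, 1) then A $$ (0, j - 1)
      else if (p,q) = (s, t) then (1 - eps) * l
      else if q = t \<and> m + k + 1 \<le> p \<and> p \<le> m + n then A $$ (p - m - 1, j - 1)
      else 0)"

definition top3 :: "real mat \<Rightarrow> real \<Rightarrow> real \<Rightarrow> nat \<Rightarrow> nat \<Rightarrow> nat \<Rightarrow> nat \<Rightarrow> nat \<Rightarrow> nat \<Rightarrow> nat \<Rightarrow> real" where
  "top3 A l eps m n j k t p q =
     (if q = p + 1 \<and> 1 \<le> p \<and> p \<le> m - 1 then l
      else if (p,q) = (m, m + j) then eps * l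
      else if (p,q) = (m + 1, 1) then A $$ (0, j - 1)
      else if (p,q) = (m, t) then (1 - eps) * l
      else if q = t \<and> m + k + 1 \<le> p \<and> p \<le> m + n then A $$ (p - m - 1, j - 1)
      else 0)"

definition mkvec :: "nat \<Rightarrow> nat \<Rightarrow> (nat \<Rightarrow> real) \<Rightarrow> real vec \<Rightarrow> real vec" where
  "mkvec m n tp x = vec (m + n) (\<lambda>i0. if i0 < m then tp (i0 + 1) else x $ (i0 - m))"

end

theory Submission
  imports Defs
begin


lemma mat_vec_sum: "A \<in> carrier_mat nr nc \<Longrightarrow> x \<in> carrier_vec nc \<Longrightarrow> i < nr \<Longrightarrow>
  (A *\<^sub>v x) $ i = (\<Sum>j<nc. A $$ (i,j) * x $ j)"
  by (auto simp: scalar_prod_def atLeast0LessThan intro!: sum.cong)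

lemma mat_mult_sum: "A \<in> carrier_mat nr n \<Longrightarrow> B \<in> carrier_mat n nc \<Longrightarrow> i < nr \<Longrightarrow> j < nc \<Longrightarrow>
  (A * B) $$ (i,j) = (\<Sum>k<n. A $$ (i,k) * B $$ (k,j))"
  by (auto simp: scalar_prod_def atLeast0LessThan intro!: sum.cong)

lemma sum_two_delta: fixes f :: "nat \<Rightarrow> real"
  assumes "i < Suc n"
  shows "(\<Sum>k<Suc n. (if k = 0 then a else if i = k then b else 0) * f k) = a * f 0 + (if i = 0 then 0 else b * f i)"
proof -
  have "(\<Sum>k<Suc n. (if k = 0 then a else if i = k then b else 0) * f k)
     = a * f 0 + (\<Sum>k<n. (if i = Suc k then b * f (Suc k) else 0))"
    unfolding sum.lessThan_Suc_shift by (auto intro!: sum.cong)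
  also have "(\<Sum>k<n. (if i = Suc k then b * f (Suc k) else 0)) = (if i = 0 then 0 else b * f i)"
    using assms by (cases i) (auto simp: sum.delta)
  finally show ?thesis .
qed

lemma block_cp:
  fixes M :: "real mat"
  assumes M: "M \<in> carrier_mat (Suc n) (Suc n)" and w: "w \<in> carrier_vec (Suc n)"
    and w0: "w $ 0 \<noteq> 0" and ev: "M *\<^sub>v w = l \<cdot>\<^sub>v w"
  shows "char_poly M = [:-l,1:] * char_poly (mat n n (\<lambda>(i,j). M $$ (Suc i, Suc j) - w $ (Suc i) * M $$ (0, Suc j) / w $ 0))"
proof -
  define C where "C = mat n n (\<lambda>(i,j). M $$ (Suc i, Suc j) - w $ (Suc i) * M $$ (0, Suc j) / w $ 0)"
  define A1 where "A1 = mat 1 1 (\<lambda>_. l)"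
  define A2 where "A2 = mat 1 n (\<lambda>(_,j). M $$ (0, Suc j) / w $ 0)"
  define T where "T = four_block_mat A1 A2 (0\<^sub>m n 1) C"
  define P where "P = mat (Suc n) (Suc n) (\<lambda>(i,j). if j = 0 then w $ i else if i = j then 1 else 0)"
  define Q where "Q = mat (Suc n) (Suc n) (\<lambda>(i,j). if j = 0 then (if i = 0 then 1 / w $ 0 else - w $ i / w $ 0)
      else if i = j then 1 else (0::real))"
  have C: "C \<in> carrier_mat n n" unfolding C_def by auto
  have A1: "A1 \<in> carrier_mat 1 1" and A2: "A2 \<in> carrier_mat 1 n" unfolding A1_def A2_def by auto
  have T: "T \<in> carrier_mat (Suc n) (Suc n)" unfolding T_def using A1 C by auto
  have P: "P \<in> carrier_mat (Suc n) (Suc n)" and Q: "Q \<in> carrier_mat (Suc n) (Suc n)"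
    unfolding P_def Q_def by auto
  have Tij: "T $$ (i,j) = (if j = 0 then (if i = 0 then l else 0) else if i = 0 then M $$ (0, j) / w $ 0
      else M $$ (i, j) - w $ i * M $$ (0, j) / w $ 0)" if "i < Suc n" "j < Suc n" for i j
    using that A1 C unfolding T_def A1_def A2_def C_def by (cases i; cases j) auto
  have Mw: "(\<Sum>k<Suc n. M $$ (i,k) * w $ k) = l * w $ i" if "i < Suc n" for i
  proof -
    have "(M *\<^sub>v w) $ i = l * w $ i" using ev that w by simp
    thus ?thesis using mat_vec_sum[OF M w that] by simp
  qed
  have PQ: "P * Q = 1\<^sub>m (Suc n)"
  proof (rule eq_matI)
    fix i j assume ij: "i < dim_row (1\<^sub>m (Suc n))" "j < dim_col (1\<^sub>m (Suc n))"
    hence "(P * Q) $$ (i,j) = (\<Sum>k<Suc n. (if k = 0 then w $ i else if i = k then 1 else 0) * Q $$ (k,j))"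
      using P Q by (subst mat_mult_sum[OF P Q]) (auto simp: P_def intro!: sum.cong)
    also have "\<dots> = 1\<^sub>m (Suc n) $$ (i,j)" using ij w0 by (subst sum_two_delta) (auto simp: Q_def field_simps)
    finally show "(P * Q) $$ (i,j) = 1\<^sub>m (Suc n) $$ (i,j)" .
  qed (insert P Q, auto)
  have QP: "Q * P = 1\<^sub>m (Suc n)"
  proof (rule eq_matI)
    fix i j assume ij: "i < dim_row (1\<^sub>m (Suc n))" "j < dim_col (1\<^sub>m (Suc n))"
    hence "(Q * P) $$ (i,j) = (\<Sum>k<Suc n. (if k = 0 then Q $$ (i,0) else if i = k then 1 else 0) * P $$ (k,j))"
      using P Q by (subst mat_mult_sum[OF Q P]) (auto simp: Q_def intro!: sum.cong)
    also have "\<dots> = 1\<^sub>m (Suc n) $$ (i,j)" using ij w0 by (subst sum_two_delta) (auto simp: Q_def P_def field_simps)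
    finally show "(Q * P) $$ (i,j) = 1\<^sub>m (Suc n) $$ (i,j)" .
  qed (insert P Q, auto)
  have PT: "P * T = M * P"
  proof (rule eq_matI)
    fix i j assume ij: "i < dim_row (M * P)" "j < dim_col (M * P)"
    hence ij': "i < Suc n" "j < Suc n" using M P by auto
    have "(P * T) $$ (i,j) = (\<Sum>k<Suc n. (if k = 0 then w $ i else if i = k then 1 else 0) * T $$ (k,j))"
      using ij' by (subst mat_mult_sum[OF P T]) (auto simp: P_def intro!: sum.cong)
    also have "\<dots> = w $ i * T $$ (0,j) + (if i = 0 then 0 else T $$ (i,j))" using ij' by (subst sum_two_delta) auto
    also have "\<dots> = (if j = 0 then l * w $ i else M $$ (i,j))" using ij' w0 by (auto simp: Tij field_simps)
    also have "\<dots> = (M * P) $$ (i,j)"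
    proof -
      have "(M * P) $$ (i,j) = (\<Sum>k<Suc n. M $$ (i,k) * P $$ (k,j))" using ij' by (subst mat_mult_sum[OF M P]) auto
      also have "\<dots> = (if j = 0 then l * w $ i else M $$ (i,j))"
      proof (cases "j = 0")
        case True thus ?thesis using Mw[OF ij'(1)] by (auto simp: P_def intro!: sum.cong)
      next
        case False
        have "(\<Sum>k<Suc n. M $$ (i,k) * P $$ (k,j)) = (\<Sum>k<Suc n. if k = j then M $$ (i,k) else 0)"
          using False ij' by (intro sum.cong) (auto simp: P_def)
        also have "\<dots> = M $$ (i,j)" using ij' by (simp add: sum.delta')
        finally show ?thesis using False by simp
      qed
      finally show ?thesis by (rule sym)
    qed
    finally show "(P * T) $$ (i,j) = (M * P) $$ (i,j)" .
  qed (insert P T M, auto)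
  have "M = P * T * Q"
  proof -
    have "M = M * (P * Q)" using M PQ by simp
    also have "\<dots> = (M * P) * Q" using M P Q by (simp add: assoc_mult_mat)
    finally show ?thesis using PT by simp
  qed
  hence "similar_mat M T" unfolding similar_mat_def similar_mat_wit_def Let_def
    using M T P Q PQ QP by (intro exI[of _ P] exI[of _ Q]) auto
  hence "char_poly M = char_poly T" by (rule char_poly_similar)
  also have "\<dots> = char_poly A1 * char_poly C"
    unfolding T_def by (rule char_poly_four_block_zeros_col[OF A1 A2 C])
  also have "char_poly A1 = [:-l,1:]"
    by (subst char_poly_upper_triangular[OF A1]) (auto simp: A1_def upper_triangular_def diag_mat_def)
  finally show ?thesis unfolding C_def .
qed


definition Cmat :: "real mat \<Rightarrow> real vec \<Rightarrow> nat \<Rightarrow> real mat" where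
  "Cmat M w n = mat n n (\<lambda>(i,j). M $$ (Suc i, Suc j) - w $ (Suc i) * M $$ (0, Suc j) / w $ 0)"

lemma Mvec_shift: assumes M: "M \<in> carrier_mat (Suc n) (Suc n)" and d: "d \<in> carrier_vec (Suc n)"
  and d0: "d $ 0 = 0" and k: "k < Suc n"
  shows "(M *\<^sub>v d) $ k = (\<Sum>j<n. M $$ (k, Suc j) * d $ Suc j)"
  unfolding mat_vec_sum[OF M d k] sum.lessThan_Suc_shift using d0 by simp

lemma C_apply: fixes M :: "real mat" assumes M: "M \<in> carrier_mat (Suc n) (Suc n)" and d: "d \<in> carrier_vec (Suc n)"
  and d0: "d $ 0 = 0" and i: "i < n"
  shows "(Cmat M w n *\<^sub>v vec n (\<lambda>i. d $ Suc i)) $ i = (M *\<^sub>v d) $ (Suc i) - w $ (Suc i) / w $ 0 * (M *\<^sub>v d) $ 0"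
proof -
  have "(Cmat M w n *\<^sub>v vec n (\<lambda>i. d $ Suc i)) $ i
     = (\<Sum>j<n. (M $$ (Suc i, Suc j) - w $ (Suc i) * M $$ (0, Suc j) / w $ 0) * d $ Suc j)"
    using i by (subst mat_vec_sum[of _ n n]) (auto simp: Cmat_def intro!: sum.cong)
  also have "\<dots> = (\<Sum>j<n. M $$ (Suc i, Suc j) * d $ Suc j) - w $ (Suc i) / w $ 0 * (\<Sum>j<n. M $$ (0, Suc j) * d $ Suc j)"
    by (simp add: sum_subtractf sum_distrib_left left_diff_distrib field_simps)
  also have "\<dots> = (M *\<^sub>v d) $ (Suc i) - w $ (Suc i) / w $ 0 * (M *\<^sub>v d) $ 0"
    using i by (simp add: Mvec_shift[OF M d d0])
  finally show ?thesis .
qed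

lemma order_decomp: fixes M :: "real mat" assumes M: "M \<in> carrier_mat (Suc n) (Suc n)" and w: "w \<in> carrier_vec (Suc n)"
    and w0: "w $ 0 \<noteq> 0" and ev: "M *\<^sub>v w = l \<cdot>\<^sub>v w"
  shows "order l (char_poly M) = Suc (order l (char_poly (Cmat M w n)))"
proof -
  have C: "Cmat M w n \<in> carrier_mat n n" unfolding Cmat_def by auto
  have cp: "char_poly M = [:-l,1:] * char_poly (Cmat M w n)"
    using block_cp[OF M w w0 ev] unfolding Cmat_def .
  have nz: "char_poly (Cmat M w n) \<noteq> 0" using degree_monic_char_poly[OF C] by auto
  have "order l (char_poly M) = order l [:-l,1:] + order l (char_poly (Cmat M w n))"
    unfolding cp by (rule order_mult) (metis mult_eq_0_iff nz pCons_eq_0_iff one_neq_zero)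
  thus ?thesis by simp
qed

lemma kernel_simple: fixes M :: "real mat" assumes M: "M \<in> carrier_mat (Suc n) (Suc n)" and w: "w \<in> carrier_vec (Suc n)"
    and w0: "w $ 0 \<noteq> 0" and ev: "M *\<^sub>v w = l \<cdot>\<^sub>v w"
    and ord: "order l (char_poly M) = 1"
    and x: "x \<in> carrier_vec (Suc n)" and xev: "M *\<^sub>v x = l \<cdot>\<^sub>v x"
  shows "x = (x $ 0 / w $ 0) \<cdot>\<^sub>v w"
proof -
  have C: "Cmat M w n \<in> carrier_mat n n" unfolding Cmat_def by auto
  have "order l (char_poly (Cmat M w n)) = 0" using order_decomp[OF M w w0 ev] ord by simp
  moreover have nz: "char_poly (Cmat M w n) \<noteq> 0" using degree_monic_char_poly[OF C] by auto
  ultimately have "poly (char_poly (Cmat M w n)) l \<noteq> 0" by (simp add: order_root)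
  hence ne: "\<not> eigenvalue (Cmat M w n) l" using eigenvalue_root_char_poly[OF C] by simp
  define d where "d = x - (x $ 0 / w $ 0) \<cdot>\<^sub>v w"
  have d: "d \<in> carrier_vec (Suc n)" using x w unfolding d_def by auto
  have d0: "d $ 0 = 0" using x w w0 unfolding d_def by auto
  have Md: "M *\<^sub>v d = l \<cdot>\<^sub>v d"
  proof -
    have "M *\<^sub>v d = M *\<^sub>v x - M *\<^sub>v ((x $ 0 / w $ 0) \<cdot>\<^sub>v w)"
      unfolding d_def by (rule mult_minus_distrib_mat_vec[OF M x]) (use w in auto)
    also have "\<dots> = l \<cdot>\<^sub>v x - (x $ 0 / w $ 0) \<cdot>\<^sub>v (l \<cdot>\<^sub>v w)"
      using M w by (simp add: mult_mat_vec xev ev)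
    also have "\<dots> = l \<cdot>\<^sub>v d" unfolding d_def using x w
      by (intro eq_vecI) (auto simp: field_simps)
    finally show ?thesis .
  qed
  define y where "y = vec n (\<lambda>i. d $ Suc i)"
  have Cy: "Cmat M w n *\<^sub>v y = l \<cdot>\<^sub>v y"
  proof (rule eq_vecI)
    fix i assume "i < dim_vec (l \<cdot>\<^sub>v y)"
    hence i: "i < n" unfolding y_def by simp
    show "(Cmat M w n *\<^sub>v y) $ i = (l \<cdot>\<^sub>v y) $ i"
      unfolding y_def C_apply[OF M d d0 i] Md using i d d0 by simp
  qed (use C in \<open>auto simp: y_def\<close>)
  have "y = 0\<^sub>v n"
  proof (rule ccontr)
    assume "y \<noteq> 0\<^sub>v n"
    hence "eigenvector (Cmat M w n) y l" unfolding eigenvector_def using C Cy by (auto simp: y_def)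
    thus False using ne unfolding eigenvalue_def by auto
  qed
  have "d = 0\<^sub>v (Suc n)"
  proof (rule eq_vecI)
    fix i assume "i < dim_vec (0\<^sub>v (Suc n))"
    hence i: "i < Suc n" by simp
    show "d $ i = 0\<^sub>v (Suc n) $ i"
    proof (cases i)
      case 0 thus ?thesis using d0 by simp
    next
      case (Suc i')
      hence "y $ i' = 0" using `y = 0\<^sub>v n` i by simp
      thus ?thesis using Suc i by (simp add: y_def)
    qed
  qed (use d in auto)
  show ?thesis
  proof (rule eq_vecI)
    fix i assume "i < dim_vec ((x $ 0 / w $ 0) \<cdot>\<^sub>v w)"
    hence i: "i < Suc n" using w by simp
    have "d $ i = 0" using `d = 0\<^sub>v (Suc n)` i by simp
    thus "x $ i = ((x $ 0 / w $ 0) \<cdot>\<^sub>v w) $ i" unfolding d_def using x w i by simp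
  qed (use x w in auto)
qed


lemma simple_from_kernel: fixes M :: "real mat"
  assumes M: "M \<in> carrier_mat (Suc n) (Suc n)" and w: "w \<in> carrier_vec (Suc n)"
    and w0: "w $ 0 \<noteq> 0" and ev: "M *\<^sub>v w = l \<cdot>\<^sub>v w"
    and ker: "\<And>x. x \<in> carrier_vec (Suc n) \<Longrightarrow> M *\<^sub>v x = l \<cdot>\<^sub>v x \<Longrightarrow> \<exists>a. x = a \<cdot>\<^sub>v w"
    and z: "z \<in> carrier_vec (Suc n)" and zev: "transpose_mat M *\<^sub>v z = l \<cdot>\<^sub>v z"
    and zw: "z \<bullet> w \<noteq> 0"
  shows "order l (char_poly M) = 1"
proof (rule ccontr)
  assume "order l (char_poly M) \<noteq> 1"
  hence o: "order l (char_poly (Cmat M w n)) \<noteq> 0" using order_decomp[OF M w w0 ev] by simp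
  have C: "Cmat M w n \<in> carrier_mat n n" unfolding Cmat_def by auto
  have "poly (char_poly (Cmat M w n)) l = 0" using o by (simp add: order_root)
  hence "eigenvalue (Cmat M w n) l" using eigenvalue_root_char_poly[OF C] by simp
  then obtain y where y: "y \<in> carrier_vec n" "y \<noteq> 0\<^sub>v n" "Cmat M w n *\<^sub>v y = l \<cdot>\<^sub>v y"
    unfolding eigenvalue_def eigenvector_def using C by auto
  define x where "x = vec (Suc n) (\<lambda>i. if i = 0 then 0 else y $ (i - 1))"
  have x: "x \<in> carrier_vec (Suc n)" and x0: "x $ 0 = 0" unfolding x_def by auto
  have xy: "vec n (\<lambda>i. x $ Suc i) = y" using y unfolding x_def by (intro eq_vecI) auto
  define \<rho> where "\<rho> = (M *\<^sub>v x) $ 0"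
  have Mx: "M *\<^sub>v x = l \<cdot>\<^sub>v x + (\<rho> / w $ 0) \<cdot>\<^sub>v w"
  proof (rule eq_vecI)
    fix i assume "i < dim_vec (l \<cdot>\<^sub>v x + (\<rho> / w $ 0) \<cdot>\<^sub>v w)"
    hence i: "i < Suc n" using w by simp
    show "(M *\<^sub>v x) $ i = (l \<cdot>\<^sub>v x + (\<rho> / w $ 0) \<cdot>\<^sub>v w) $ i"
    proof (cases i)
      case 0 thus ?thesis using x w w0 x0 by (simp add: \<rho>_def)
    next
      case (Suc i')
      hence i': "i' < n" using i by simp
      have "(Cmat M w n *\<^sub>v y) $ i' = (M *\<^sub>v x) $ (Suc i') - w $ (Suc i') / w $ 0 * \<rho>"
        using C_apply[OF M x x0 i'] unfolding xy \<rho>_def .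
      hence "(M *\<^sub>v x) $ (Suc i') = l * y $ i' + w $ (Suc i') / w $ 0 * \<rho>" using y i' by simp
      thus ?thesis using Suc i' x w y by (simp add: x_def)
    qed
  qed (use M w in auto)
  have "z \<bullet> (M *\<^sub>v x) = (transpose_mat M *\<^sub>v z) \<bullet> x"
    by (rule transpose_vec_mult_scalar[OF M x z, symmetric])
  also have "\<dots> = l * (z \<bullet> x)" unfolding zev using z x by simp
  finally have "z \<bullet> (M *\<^sub>v x) = l * (z \<bullet> x)" .
  moreover have "z \<bullet> (M *\<^sub>v x) = l * (z \<bullet> x) + (\<rho> / w $ 0) * (z \<bullet> w)"
    unfolding Mx using z x w by (simp add: scalar_prod_add_distrib[of _ "Suc n"])
  ultimately have "\<rho> = 0" using zw w0 by simp
  hence "M *\<^sub>v x = l \<cdot>\<^sub>v x" unfolding Mx using x w by (intro eq_vecI) auto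
  from ker[OF x this] obtain a where a: "x = a \<cdot>\<^sub>v w" by auto
  hence "a * w $ 0 = 0" using x0 w by (metis index_smult_vec(1) zero_less_Suc carrier_vecD)
  hence "a = 0" using w0 by simp
  hence "x = 0\<^sub>v (Suc n)" using a w by auto
  hence "y = 0\<^sub>v n" unfolding xy[symmetric] by (intro eq_vecI) auto
  thus False using y by simp
qed




lemma poly_mat_alt: assumes "degree f < D" "i < dim_row M" "j < dim_row M"
  shows "poly_mat f M $$ (i,j) = (\<Sum>d<D. coeff f d * (M ^\<^sub>m d) $$ (i,j))"
proof -
  have "poly_mat f M $$ (i,j) = (\<Sum>d\<le>degree f. coeff f d * (M ^\<^sub>m d) $$ (i,j))"
    using assms unfolding poly_mat_def by simp
  also have "\<dots> = (\<Sum>d<D. coeff f d * (M ^\<^sub>m d) $$ (i,j))"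
    by (rule sum.mono_neutral_left) (use assms in \<open>auto simp: coeff_eq_0\<close>)
  finally show ?thesis .
qed

lemma coeff_x_mult: "coeff ([:0,1:] * (p :: real poly)) d = (if d = 0 then 0 else coeff p (d - 1))"
  by (cases d) (auto simp: coeff_pCons)

lemma cayley_hamilton: fixes A :: "real mat"
  assumes A: "A \<in> carrier_mat N N"
  shows "poly_mat (char_poly A) A = 0\<^sub>m N N"
proof -
  define X where "X = char_poly_matrix A"
  have X: "X \<in> carrier_mat N N" unfolding X_def using A by simp
  define Adj where "Adj = adj_mat X"
  have Adj: "Adj \<in> carrier_mat N N" and XA: "X * Adj = det X \<cdot>\<^sub>m 1\<^sub>m N"
    using adj_mat[OF X] unfolding Adj_def by auto
  have dX: "det X = char_poly A" unfolding X_def char_poly_def ..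
  define Cd where "Cd d = mat N N (\<lambda>(i,j). coeff (Adj $$ (i,j)) d)" for d
  have Cd: "Cd d \<in> carrier_mat N N" for d unfolding Cd_def by simp
  define K where "K = (\<Sum>i<N. \<Sum>j<N. degree (Adj $$ (i,j))) + 1"
  have Cd0: "Cd d = 0\<^sub>m N N" if "K \<le> d" for d
  proof (rule eq_matI)
    fix i j assume ij: "i < dim_row (0\<^sub>m N N)" "j < dim_col (0\<^sub>m N N)"
    have "degree (Adj $$ (i,j)) \<le> (\<Sum>j<N. degree (Adj $$ (i,j)))"
      by (rule member_le_sum) (use ij in auto)
    also have "\<dots> \<le> (\<Sum>i<N. \<Sum>j<N. degree (Adj $$ (i,j)))"
      by (rule member_le_sum[of i "{..<N}" "\<lambda>i. \<Sum>j<N. degree (Adj $$ (i,j))"]) (use ij in auto)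
    finally have "degree (Adj $$ (i,j)) < d" using that unfolding K_def by simp
    thus "Cd d $$ (i,j) = 0\<^sub>m N N $$ (i,j)" using ij by (simp add: Cd_def coeff_eq_0)
  qed (auto simp: Cd_def)
  define Cs where "Cs d = (if d = 0 then 0\<^sub>m N N else Cd (d - 1))" for d
  have Cs: "Cs d \<in> carrier_mat N N" for d unfolding Cs_def using Cd by auto
  have key: "coeff (char_poly A) d \<cdot>\<^sub>m 1\<^sub>m N = Cs d - A * Cd d" for d
  proof (rule eq_matI)
    fix i j assume ij: "i < dim_row (Cs d - A * Cd d)" "j < dim_col (Cs d - A * Cd d)"
    hence ij: "i < N" "j < N" using Cs A Cd by (auto simp: Cd_def)
    have "(X * Adj) $$ (i,j) = (\<Sum>k<N. X $$ (i,k) * Adj $$ (k,j))"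
      by (rule mat_mult_sum[OF X Adj ij])
    also have "\<dots> = (\<Sum>k<N. (if i = k then [:0,1:] * Adj $$ (k,j) else 0) + [:- A $$ (i,k):] * Adj $$ (k,j))"
      using ij A by (intro sum.cong) (auto simp: X_def char_poly_matrix_def distrib_right)
    also have "\<dots> = [:0,1:] * Adj $$ (i,j) + (\<Sum>k<N. [:- A $$ (i,k):] * Adj $$ (k,j))"
      by (simp only: sum.distrib sum.delta' finite_lessThan) (use ij in simp)
    finally have e: "(X * Adj) $$ (i,j) = [:0,1:] * Adj $$ (i,j) + (\<Sum>k<N. [:- A $$ (i,k):] * Adj $$ (k,j))" .
    have "coeff ((X * Adj) $$ (i,j)) d = (if i = j then coeff (char_poly A) d else 0)"
      unfolding XA dX using ij by simp
    hence "(if i = j then coeff (char_poly A) d else 0)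
        = (if d = 0 then 0 else coeff (Adj $$ (i,j)) (d - 1)) - (\<Sum>k<N. A $$ (i,k) * coeff (Adj $$ (k,j)) d)"
      unfolding e coeff_add coeff_x_mult coeff_sum by (simp add: sum_negf)
    also have "\<dots> = (Cs d - A * Cd d) $$ (i,j)"
    proof -
      have m: "(A * Cd d) $$ (i,j) = (\<Sum>k<N. A $$ (i,k) * coeff (Adj $$ (k,j)) d)"
        unfolding mat_mult_sum[OF A Cd ij] using ij by (intro sum.cong) (auto simp: Cd_def)
      have "(Cs d - A * Cd d) $$ (i,j) = Cs d $$ (i,j) - (A * Cd d) $$ (i,j)"
        using ij Cs Cd A by (subst index_minus_mat) (auto simp: Cd_def)
      thus ?thesis unfolding m using ij by (simp add: Cs_def Cd_def)
    qed
    finally show "(coeff (char_poly A) d \<cdot>\<^sub>m 1\<^sub>m N) $$ (i,j) = (Cs d - A * Cd d) $$ (i,j)"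
      using ij by (cases "i = j") auto
  qed (use A Cs in \<open>auto simp: Cd_def\<close>)
  show ?thesis
  proof (rule eq_matI)
    fix i j assume ij: "i < dim_row (0\<^sub>m N N)" "j < dim_col (0\<^sub>m N N)"
    hence ij: "i < N" "j < N" by auto
    define D where "D = max (degree (char_poly A) + 1) (K + 1)"
    define F where "F d = (A ^\<^sub>m d * Cs d) $$ (i,j)" for d
    have tm: "coeff (char_poly A) d * (A ^\<^sub>m d) $$ (i,j) = F d - F (Suc d)" for d
    proof -
      have Ad: "A ^\<^sub>m d \<in> carrier_mat N N" using A by simp
      have "coeff (char_poly A) d * (A ^\<^sub>m d) $$ (i,j) = (A ^\<^sub>m d * (coeff (char_poly A) d \<cdot>\<^sub>m 1\<^sub>m N)) $$ (i,j)"
        using ij Ad A by (simp add: mult_smult_distrib[OF Ad one_carrier_mat] right_mult_one_mat[OF Ad])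
      also have "A ^\<^sub>m d * (coeff (char_poly A) d \<cdot>\<^sub>m 1\<^sub>m N) = A ^\<^sub>m d * Cs d - A ^\<^sub>m d * (A * Cd d)"
        unfolding key by (rule mult_minus_distrib_mat[OF Ad Cs]) (use A Cd in simp)
      also have "A ^\<^sub>m d * (A * Cd d) = A ^\<^sub>m Suc d * Cs (Suc d)"
        unfolding Cs_def using assoc_mult_mat[OF Ad A Cd[of d]] by simp
      also have "(A ^\<^sub>m d * Cs d - A ^\<^sub>m Suc d * Cs (Suc d)) $$ (i,j) = F d - F (Suc d)"
        unfolding F_def by (rule index_minus_mat) (use ij A Cs[of d] Cs[of "Suc d"] in auto)
      finally show ?thesis .
    qed
    have "poly_mat (char_poly A) A $$ (i,j) = (\<Sum>d<D. coeff (char_poly A) d * (A ^\<^sub>m d) $$ (i,j))"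
      by (rule poly_mat_alt) (use ij A in \<open>auto simp: D_def\<close>)
    also have "\<dots> = F 0 - F D" unfolding tm by (rule sum_lessThan_telescope')
    also have "F 0 = 0" unfolding F_def using ij A by (simp add: Cs_def)
    also have "F D = 0" unfolding F_def using ij A Cd0[of "D - 1"]
      by (simp add: Cs_def D_def)
    finally show "poly_mat (char_poly A) A $$ (i,j) = 0\<^sub>m N N $$ (i,j)" using ij by simp
  qed (use A in \<open>auto simp: poly_mat_def\<close>)
qed


lemma coeff_lin_mult: "coeff ([:-l,1:] * (g :: real poly)) d = (if d = 0 then 0 else coeff g (d - 1)) - l * coeff g d"
  by (cases d) (simp_all add: coeff_pCons)

lemma pow_mat_Suc': assumes M: "M \<in> carrier_mat N N" shows "M ^\<^sub>m Suc d = M * M ^\<^sub>m d"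
proof (induct d)
  case 0 thus ?case using M by simp
next
  case (Suc d)
  have "M ^\<^sub>m Suc (Suc d) = (M * M ^\<^sub>m d) * M" using Suc by simp
  also have "\<dots> = M * (M ^\<^sub>m d * M)" using M by (simp add: assoc_mult_mat[of _ N N _ N _ N])
  finally show ?case by simp
qed

lemma left_ev_pow: fixes M :: "real mat"
  assumes M: "M \<in> carrier_mat N N" and z: "z \<in> carrier_vec N" and zev: "transpose_mat M *\<^sub>v z = l \<cdot>\<^sub>v z"
    and j: "j < N"
  shows "(\<Sum>i<N. z $ i * (M ^\<^sub>m d) $$ (i,j)) = l ^ d * z $ j"
  using j
proof (induct d arbitrary: j)
  case 0 thus ?case using M by (simp add: sum.delta' if_distrib cong: if_cong)
next
  case (Suc d)
  have zk: "(\<Sum>k<N. M $$ (k,j) * z $ k) = l * z $ j"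
  proof -
    have "(transpose_mat M *\<^sub>v z) $ j = l * z $ j" using zev Suc z by simp
    moreover have "(transpose_mat M *\<^sub>v z) $ j = (\<Sum>k<N. M $$ (k,j) * z $ k)"
      using M z Suc by (subst mat_vec_sum[of _ N N]) auto
    ultimately show ?thesis by simp
  qed
  have Md: "M ^\<^sub>m d \<in> carrier_mat N N" using M by simp
  have "(\<Sum>i<N. z $ i * (M ^\<^sub>m Suc d) $$ (i,j)) = (\<Sum>i<N. z $ i * (\<Sum>k<N. (M ^\<^sub>m d) $$ (i,k) * M $$ (k,j)))"
    using Suc(2) by (intro sum.cong refl) (simp only: pow_mat.simps(2), subst mat_mult_sum[OF Md M], auto)
  also have "\<dots> = (\<Sum>i<N. \<Sum>k<N. z $ i * (M ^\<^sub>m d) $$ (i,k) * M $$ (k,j))"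
    by (simp add: sum_distrib_left mult.assoc)
  also have "\<dots> = (\<Sum>k<N. \<Sum>i<N. z $ i * (M ^\<^sub>m d) $$ (i,k) * M $$ (k,j))"
    by (rule sum.swap)
  also have "\<dots> = (\<Sum>k<N. (\<Sum>i<N. z $ i * (M ^\<^sub>m d) $$ (i,k)) * M $$ (k,j))"
    by (simp add: sum_distrib_right)
  also have "\<dots> = (\<Sum>k<N. l ^ d * z $ k * M $$ (k,j))" using Suc by (intro sum.cong) auto
  also have "\<dots> = l ^ d * (l * z $ j)" unfolding zk[symmetric] by (simp add: sum_distrib_left ac_simps)
  finally show ?case by simp
qed

lemma alg_pos: fixes M :: "real mat"
  assumes M: "M \<in> carrier_mat N N" and w: "w \<in> carrier_vec N" and z: "z \<in> carrier_vec N"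
    and wpos: "\<forall>i<N. w $ i > 0" and zpos: "\<forall>i<N. z $ i > 0"
    and zev: "transpose_mat M *\<^sub>v z = l \<cdot>\<^sub>v z"
    and ker: "\<And>x. x \<in> carrier_vec N \<Longrightarrow> M *\<^sub>v x = l \<cdot>\<^sub>v x \<Longrightarrow> \<exists>a. x = a \<cdot>\<^sub>v w"
    and ord: "order l (char_poly M) = 1" and N: "0 < N"
  shows "algebraically_positive M"
proof -
  let ?cp = "char_poly M"
  have cp0: "?cp \<noteq> 0" using degree_monic_char_poly[OF M] by auto
  have "poly ?cp l = 0" using ord by (simp add: order_root)
  then obtain g where g: "?cp = [:-l,1:] * g" by (auto simp: poly_eq_0_iff_dvd)
  have g0: "g \<noteq> 0" using cp0 g by auto
  have "order l ?cp = order l [:-l,1:] + order l g" unfolding g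
    by (rule order_mult) (use cp0 g in simp)
  hence "order l g = 0" using ord by simp
  hence pg: "poly g l \<noteq> 0" using g0 by (simp add: order_root)
  have dg: "degree ?cp = Suc (degree g)" unfolding g by (subst degree_mult_eq) (use g0 in auto)
  define D where "D = Suc (degree g)"
  define G where "G = poly_mat g M"
  have G: "G \<in> carrier_mat N N" unfolding G_def poly_mat_def using M by auto
  have Gij: "G $$ (i,j) = (\<Sum>d<D. coeff g d * (M ^\<^sub>m d) $$ (i,j))" if "i < N" "j < N" for i j
    unfolding G_def by (rule poly_mat_alt) (use that M in \<open>auto simp: D_def\<close>)
  have MG: "M * G = l \<cdot>\<^sub>m G"
  proof (rule eq_matI)
    fix i j assume "i < dim_row (l \<cdot>\<^sub>m G)" "j < dim_col (l \<cdot>\<^sub>m G)"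
    hence ij: "i < N" "j < N" using G by auto
    have "0 = poly_mat ?cp M $$ (i,j)" using cayley_hamilton[OF M] ij by simp
    also have "\<dots> = (\<Sum>d<Suc D. coeff ?cp d * (M ^\<^sub>m d) $$ (i,j))"
      by (rule poly_mat_alt) (use ij M dg in \<open>auto simp: D_def\<close>)
    also have "\<dots> = (\<Sum>d<Suc D. (if d = 0 then 0 else coeff g (d - 1)) * (M ^\<^sub>m d) $$ (i,j))
        - l * (\<Sum>d<Suc D. coeff g d * (M ^\<^sub>m d) $$ (i,j))"
      unfolding g coeff_lin_mult by (simp add: sum_subtractf left_diff_distrib sum_distrib_left mult.assoc distrib_left)
    also have "(\<Sum>d<Suc D. (if d = 0 then 0 else coeff g (d - 1)) * (M ^\<^sub>m d) $$ (i,j))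
        = (\<Sum>d<D. coeff g d * (M ^\<^sub>m Suc d) $$ (i,j))"
      unfolding sum.lessThan_Suc_shift by simp
    also have "\<dots> = (M * G) $$ (i,j)"
    proof -
      have "(M * G) $$ (i,j) = (\<Sum>k<N. M $$ (i,k) * (\<Sum>d<D. coeff g d * (M ^\<^sub>m d) $$ (k,j)))"
        unfolding mat_mult_sum[OF M G ij] using ij by (intro sum.cong) (auto simp: Gij)
      also have "\<dots> = (\<Sum>k<N. \<Sum>d<D. coeff g d * (M $$ (i,k) * (M ^\<^sub>m d) $$ (k,j)))"
        by (simp add: sum_distrib_left ac_simps)
      also have "\<dots> = (\<Sum>d<D. \<Sum>k<N. coeff g d * (M $$ (i,k) * (M ^\<^sub>m d) $$ (k,j)))"
        by (rule sum.swap)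
      also have "\<dots> = (\<Sum>d<D. coeff g d * (\<Sum>k<N. M $$ (i,k) * (M ^\<^sub>m d) $$ (k,j)))"
        by (simp add: sum_distrib_left)
      also have "\<dots> = (\<Sum>d<D. coeff g d * (M ^\<^sub>m Suc d) $$ (i,j))"
        using ij M by (intro sum.cong refl) (subst pow_mat_Suc'[OF M], subst mat_mult_sum[OF M pow_carrier_mat[OF M]], auto)
      finally show ?thesis by simp
    qed
    also have "(\<Sum>d<Suc D. coeff g d * (M ^\<^sub>m d) $$ (i,j)) = G $$ (i,j)"
      unfolding sum.lessThan_Suc by (simp add: Gij ij D_def coeff_eq_0)
    finally show "(M * G) $$ (i,j) = (l \<cdot>\<^sub>m G) $$ (i,j)" using ij G by simp
  qed (use M G in auto)
  have cols: "\<exists>a. \<forall>i<N. G $$ (i,j) = a * w $ i" if j: "j < N" for j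
  proof -
    have c: "col G j \<in> carrier_vec N" using G unfolding carrier_vec_def by auto
    have "M *\<^sub>v col G j = col (M * G) j" by (rule col_mult2[symmetric, OF M G j])
    also have "\<dots> = l \<cdot>\<^sub>v col G j" unfolding MG using G j by (intro eq_vecI) auto
    finally obtain a where "col G j = a \<cdot>\<^sub>v w" using ker[OF c] by auto
    hence "\<forall>i<N. G $$ (i,j) = a * w $ i"
    proof (intro allI impI)
      fix i assume i: "i < N"
      have "col G j $ i = (a \<cdot>\<^sub>v w) $ i" using `col G j = a \<cdot>\<^sub>v w` by simp
      thus "G $$ (i,j) = a * w $ i" using G j w i by simp
    qed
    thus ?thesis by blast
  qed
  have w0: "w $ 0 > 0" using wpos N by simp
  define a where "a j = G $$ (0,j) / w $ 0" for j
  have Ga: "G $$ (i,j) = a j * w $ i" if ij: "i < N" "j < N" for i j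
  proof -
    obtain b where b: "\<forall>i<N. G $$ (i,j) = b * w $ i" using cols[OF ij(2)] by blast
    hence "a j = b" unfolding a_def using N w0 by simp
    thus ?thesis using b ij by simp
  qed
  define q where "q = z \<bullet> w"
  have q_sum: "q = (\<Sum>i<N. z $ i * w $ i)" unfolding q_def scalar_prod_def using w
    by (simp add: atLeast0LessThan)
  have q: "q > 0" unfolding q_sum
    by (rule sum_pos) (use N wpos zpos in auto)
  have zG: "(\<Sum>i<N. z $ i * G $$ (i,j)) = poly g l * z $ j" if j: "j < N" for j
  proof -
    have "(\<Sum>i<N. z $ i * G $$ (i,j)) = (\<Sum>i<N. z $ i * (\<Sum>d<D. coeff g d * (M ^\<^sub>m d) $$ (i,j)))"
      using j by (intro sum.cong) (auto simp: Gij)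
    also have "\<dots> = (\<Sum>i<N. \<Sum>d<D. coeff g d * (z $ i * (M ^\<^sub>m d) $$ (i,j)))"
      by (simp add: sum_distrib_left ac_simps)
    also have "\<dots> = (\<Sum>d<D. \<Sum>i<N. coeff g d * (z $ i * (M ^\<^sub>m d) $$ (i,j)))"
      by (rule sum.swap)
    also have "\<dots> = (\<Sum>d<D. coeff g d * (\<Sum>i<N. z $ i * (M ^\<^sub>m d) $$ (i,j)))"
      by (simp add: sum_distrib_left)
    also have "\<dots> = (\<Sum>d<D. coeff g d * l ^ d) * z $ j"
      using left_ev_pow[OF M z zev j] by (simp add: sum_distrib_left sum_distrib_right ac_simps)
    also have "(\<Sum>d<D. coeff g d * l ^ d) = poly g l"
      unfolding poly_altdef D_def lessThan_Suc_atMost ..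
    finally show ?thesis .
  qed
  have aj: "a j = poly g l * z $ j / q" if j: "j < N" for j
  proof -
    have "(\<Sum>i<N. z $ i * G $$ (i,j)) = a j * q"
      unfolding q_sum sum_distrib_left using j by (intro sum.cong) (auto simp: Ga)
    thus ?thesis using zG[OF j] q by (simp add: field_simps)
  qed
  define f where "f = Polynomial.smult (1 / poly g l) g"
  show ?thesis unfolding algebraically_positive_def
  proof (intro exI[of _ f] allI impI)
    fix i j assume i: "i < dim_row M" and j: "j < dim_row M"
    hence ij: "i < N" "j < N" using M by auto
    have "poly_mat f M $$ (i,j) = (\<Sum>d<D. coeff f d * (M ^\<^sub>m d) $$ (i,j))"
      by (rule poly_mat_alt) (use i j degree_smult_le[of "1 / poly g l" g] in \<open>auto simp: D_def f_def\<close>)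
    also have "\<dots> = (1 / poly g l) * G $$ (i,j)"
      unfolding Gij[OF ij] f_def by (simp add: sum_distrib_left mult.assoc)
    also have "\<dots> = z $ j * w $ i / q" using pg unfolding Ga[OF ij] aj[OF ij(2)] by simp
    finally show "poly_mat f M $$ (i,j) > 0" using q wpos zpos ij by simp
  qed
qed




definition TPF :: "real mat \<Rightarrow> nat \<Rightarrow> nat \<Rightarrow> nat \<Rightarrow> nat \<Rightarrow> (nat \<Rightarrow> real) \<Rightarrow> real \<Rightarrow> nat \<Rightarrow> nat \<Rightarrow> real \<Rightarrow> nat \<Rightarrow> nat \<Rightarrow> real" where
  "TPF A m n j k \<alpha> \<beta> r \<sigma> \<mu> p q = (if p \<le> m \<and> q \<le> m then
      (if q = Suc p \<and> p < m then \<alpha> p else 0) + (if p = r \<and> q = \<sigma> then \<beta> else 0)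
    else if p \<le> m then (if p = m \<and> q = m + j then \<mu> else 0)
    else if q \<le> m then (if p = m + 1 \<and> q = 1 then A $$ (0, j - 1)
       else if q = \<sigma> \<and> m + k + 1 \<le> p then A $$ (p - m - 1, j - 1) else 0)
    else 0)"

lemma B_base:
  assumes spec: "\<forall>p q. 1 \<le> p \<longrightarrow> p \<le> m + n \<longrightarrow> 1 \<le> q \<longrightarrow> q \<le> m + n
      \<longrightarrow> \<not> (m < p \<and> m < q \<and> \<not> inE m n j k p q) \<longrightarrow> tp p q = TPF A m n j k \<alpha> \<beta> r \<sigma> \<mu> p q"
    and p0: "p0 < m + n" and q0: "q0 < m + n"
  shows "mkB A m n j k tp $$ (p0,q0) = (if m < Suc p0 \<and> m < Suc q0 \<and> \<not> inE m n j k (Suc p0) (Suc q0)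
     then A $$ (p0 - m, q0 - m) else TPF A m n j k \<alpha> \<beta> r \<sigma> \<mu> (Suc p0) (Suc q0))"
proof -
  have e: "mkB A m n j k tp $$ (p0,q0) = (if m < Suc p0 \<and> m < Suc q0 \<and> \<not> inE m n j k (Suc p0) (Suc q0)
     then A $$ (p0 - m, q0 - m) else tp (Suc p0) (Suc q0))"
    using p0 q0 unfolding mkB_def by (simp add: Let_def)
  show ?thesis
  proof (cases "m < Suc p0 \<and> m < Suc q0 \<and> \<not> inE m n j k (Suc p0) (Suc q0)")
    case True thus ?thesis using e by simp
  next
    case False
    have "tp (Suc p0) (Suc q0) = TPF A m n j k \<alpha> \<beta> r \<sigma> \<mu> (Suc p0) (Suc q0)"
      by (rule spec[rule_format]) (use p0 q0 False in auto)
    thus ?thesis using e unfolding if_not_P[OF False] by simp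
  qed
qed

context
  fixes A :: "real mat" and m n j k :: nat and tp :: "nat \<Rightarrow> nat \<Rightarrow> real"
    and \<alpha> :: "nat \<Rightarrow> real" and \<beta> \<mu> :: real and r \<sigma> :: nat
  assumes spec: "\<forall>p q. 1 \<le> p \<longrightarrow> p \<le> m + n \<longrightarrow> 1 \<le> q \<longrightarrow> q \<le> m + n
      \<longrightarrow> \<not> (m < p \<and> m < q \<and> \<not> inE m n j k p q) \<longrightarrow> tp p q = TPF A m n j k \<alpha> \<beta> r \<sigma> \<mu> p q"
    and r: "1 \<le> r" "r \<le> m" and \<sigma>: "1 \<le> \<sigma>" "\<sigma> \<le> m" and j: "1 \<le> j" "j \<le> n" and k: "1 \<le> k"
begin

lemma B_TL: assumes p0: "p0 < m" and q0: "q0 < m"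
  shows "mkB A m n j k tp $$ (p0,q0) = (if q0 = Suc p0 \<and> Suc p0 < m then \<alpha> (Suc p0) else 0)
    + (if q0 = \<sigma> - 1 \<and> Suc p0 = r then \<beta> else 0)"
proof -
  have "mkB A m n j k tp $$ (p0,q0) = TPF A m n j k \<alpha> \<beta> r \<sigma> \<mu> (Suc p0) (Suc q0)"
    using B_base[OF spec, of p0 q0] p0 q0 by simp
  also have "\<dots> = (if Suc q0 = Suc (Suc p0) \<and> Suc p0 < m then \<alpha> (Suc p0) else 0)
    + (if Suc p0 = r \<and> Suc q0 = \<sigma> then \<beta> else 0)" unfolding TPF_def using p0 q0 by simp
  also have "(Suc q0 = \<sigma>) = (q0 = \<sigma> - 1)" using \<sigma> by arith
  finally show ?thesis by (simp add: conj_commute)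
qed

lemma B_TR: assumes p0: "p0 < m" and q0: "m \<le> q0" "q0 < m + n"
  shows "mkB A m n j k tp $$ (p0,q0) = (if q0 = m + j - 1 \<and> Suc p0 = m then \<mu> else 0)"
proof -
  have "mkB A m n j k tp $$ (p0,q0) = TPF A m n j k \<alpha> \<beta> r \<sigma> \<mu> (Suc p0) (Suc q0)"
    using B_base[OF spec, of p0 q0] p0 q0 by simp
  also have "\<dots> = (if Suc p0 = m \<and> Suc q0 = m + j then \<mu> else 0)" unfolding TPF_def using p0 q0 by simp
  also have "(Suc q0 = m + j) = (q0 = m + j - 1)" using j by arith
  finally show ?thesis by (simp add: conj_commute)
qed

lemma B_BL: assumes p0: "m \<le> p0" "p0 < m + n" and q0: "q0 < m"
  shows "mkB A m n j k tp $$ (p0,q0) = (if q0 = 0 \<and> p0 = m then A $$ (0, j - 1) else 0)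
    + (if q0 = \<sigma> - 1 \<and> m + k \<le> p0 then A $$ (p0 - m, j - 1) else 0)"
proof -
  have "mkB A m n j k tp $$ (p0,q0) = TPF A m n j k \<alpha> \<beta> r \<sigma> \<mu> (Suc p0) (Suc q0)"
    using B_base[OF spec, of p0 q0] p0 q0 by simp
  also have "\<dots> = (if Suc p0 = m + 1 \<and> Suc q0 = 1 then A $$ (0, j - 1)
       else if Suc q0 = \<sigma> \<and> m + k + 1 \<le> Suc p0 then A $$ (Suc p0 - m - 1, j - 1) else 0)"
    unfolding TPF_def using p0 q0 by simp
  also have "(Suc q0 = \<sigma>) = (q0 = \<sigma> - 1)" using \<sigma> by arith
  also have "(Suc p0 = m + 1 \<and> Suc q0 = 1) = (q0 = 0 \<and> p0 = m)" by arith
  also have "(m + k + 1 \<le> Suc p0) = (m + k \<le> p0)" by arith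
  also have "Suc p0 - m - 1 = p0 - m" by arith
  finally show ?thesis using k by auto
qed

lemma B_BR: assumes p0: "m \<le> p0" "p0 < m + n" and q0: "m \<le> q0" "q0 < m + n"
  shows "mkB A m n j k tp $$ (p0,q0) =
    (if \<not> (q0 = m + j - 1 \<and> (p0 = m \<or> m + k \<le> p0)) then A $$ (p0 - m, q0 - m) else 0)"
proof -
  have iE: "inE m n j k (Suc p0) (Suc q0) = (q0 = m + j - 1 \<and> (p0 = m \<or> m + k \<le> p0))"
    unfolding inE_def using j p0 q0 by arith
  show ?thesis
  proof (cases "q0 = m + j - 1 \<and> (p0 = m \<or> m + k \<le> p0)")
    case True
    hence "mkB A m n j k tp $$ (p0,q0) = TPF A m n j k \<alpha> \<beta> r \<sigma> \<mu> (Suc p0) (Suc q0)"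
      using B_base[OF spec, of p0 q0] p0 q0 iE by simp
    also have "\<dots> = 0" unfolding TPF_def using p0 q0 by simp
    finally show ?thesis using True by simp
  next
    case False
    thus ?thesis using B_base[OF spec, of p0 q0] p0 q0 iE by simp
  qed
qed

end




lemma sum_split_add: fixes m n :: nat shows "(\<Sum>q<m+n. f q) = (\<Sum>q<m. f q) + (\<Sum>q<n. f (m+q))"
  by (induct n) (auto simp: add.assoc)

lemma sum_delta_c: fixes f c :: "nat \<Rightarrow> real" shows "finite S \<Longrightarrow> (\<Sum>q\<in>S. (if q = a \<and> P then c q else 0) * f q) = (if a \<in> S \<and> P then c a * f a else 0)"
proof -
  assume S: "finite S"
  have "(\<Sum>q\<in>S. (if q = a \<and> P then c q else 0) * f q) = (\<Sum>q\<in>S. if q = a then (if P then c q * f q else 0) else 0)"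
    by (intro sum.cong) auto
  also have "\<dots> = (if a \<in> S then (if P then c a * f a else 0) else 0)" by (rule sum.delta[OF S])
  finally show ?thesis by simp
qed

lemma sum_excl: fixes n c :: nat shows "(\<Sum>q<n. (if \<not> (q = c \<and> E) then f q else 0)) = (\<Sum>q<n. f q) - (if E \<and> c < n then f c else (0::real))"
proof -
  have "(\<Sum>q<n. (if \<not> (q = c \<and> E) then f q else 0)) = (\<Sum>q<n. f q - (if q = c \<and> E then f q else 0))"
    by (intro sum.cong) auto
  also have "\<dots> = (\<Sum>q<n. f q) - (\<Sum>q<n. (if q = c \<and> E then f q else 0))" by (rule sum_subtractf)
  also have "(\<Sum>q<n. (if q = c \<and> E then f q else 0)) = (if E \<and> c < n then f c else 0)"
    by (cases E) (auto simp: sum.delta)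
  finally show ?thesis .
qed

context
  fixes A :: "real mat" and m n j k :: nat and tp :: "nat \<Rightarrow> nat \<Rightarrow> real"
    and \<alpha> :: "nat \<Rightarrow> real" and \<beta> \<mu> :: real and r \<sigma> :: nat
  assumes spec: "\<forall>p q. 1 \<le> p \<longrightarrow> p \<le> m + n \<longrightarrow> 1 \<le> q \<longrightarrow> q \<le> m + n
      \<longrightarrow> \<not> (m < p \<and> m < q \<and> \<not> inE m n j k p q) \<longrightarrow> tp p q = TPF A m n j k \<alpha> \<beta> r \<sigma> \<mu> p q"
    and r: "1 \<le> r" "r \<le> m" and \<sigma>: "1 \<le> \<sigma>" "\<sigma> \<le> m" and j: "1 \<le> j" "j \<le> n" and k: "1 \<le> k"
    and A: "A \<in> carrier_mat n n"
begin

abbreviation "BB \<equiv> mkB A m n j k tp"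

lemma BB: "BB \<in> carrier_mat (m+n) (m+n)" unfolding mkB_def by simp

lemmas BTL = B_TL[OF spec r \<sigma> j k] and BTR = B_TR[OF spec r \<sigma> j k]
  and BBL = B_BL[OF spec r \<sigma> j k] and BBR = B_BR[OF spec r \<sigma> j k]

lemma row_top: assumes x: "x \<in> carrier_vec (m+n)" and p0: "p0 < m"
  shows "(BB *\<^sub>v x) $ p0 = (if Suc p0 < m then \<alpha> (Suc p0) * x $ (Suc p0) else 0)
     + (if Suc p0 = r then \<beta> * x $ (\<sigma> - 1) else 0) + (if Suc p0 = m then \<mu> * x $ (m + j - 1) else 0)"
proof -
  have "(BB *\<^sub>v x) $ p0 = (\<Sum>q<m+n. BB $$ (p0,q) * x $ q)" using mat_vec_sum[OF BB x] p0 by simp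
  also have "\<dots> = (\<Sum>q<m. BB $$ (p0,q) * x $ q) + (\<Sum>q<n. BB $$ (p0,m+q) * x $ (m+q))" by (rule sum_split_add)
  also have "(\<Sum>q<m. BB $$ (p0,q) * x $ q) = (\<Sum>q<m. (if q = Suc p0 \<and> Suc p0 < m then \<alpha> (Suc p0) else 0) * x $ q)
      + (\<Sum>q<m. (if q = \<sigma> - 1 \<and> Suc p0 = r then \<beta> else 0) * x $ q)"
    unfolding sum.distrib[symmetric] by (intro sum.cong) (use p0 in \<open>auto simp: BTL distrib_right\<close>)
  also have "\<dots> = (if Suc p0 < m then \<alpha> (Suc p0) * x $ (Suc p0) else 0) + (if Suc p0 = r then \<beta> * x $ (\<sigma> - 1) else 0)"
    by (subst sum_delta_c, simp, subst sum_delta_c, simp) (use \<sigma> in auto)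
  also have "(\<Sum>q<n. BB $$ (p0,m+q) * x $ (m+q)) = (\<Sum>q<n. (if q = j - 1 \<and> Suc p0 = m then \<mu> else 0) * x $ (m+q))"
    by (intro sum.cong) (use p0 j in \<open>auto simp: BTR\<close>)
  also have "\<dots> = (if Suc p0 = m then \<mu> * x $ (m + j - 1) else 0)"
    by (subst sum_delta_c, simp) (use j in auto)
  finally show ?thesis .
qed

lemma row_bot: assumes x: "x \<in> carrier_vec (m+n)" and i: "i < n"
  shows "(BB *\<^sub>v x) $ (m+i) = (if i = 0 then A $$ (0, j - 1) * x $ 0 else 0)
     + (if k \<le> i then A $$ (i, j - 1) * x $ (\<sigma> - 1) else 0)
     + ((A *\<^sub>v vec n (\<lambda>q. x $ (m+q))) $ i - (if i = 0 \<or> k \<le> i then A $$ (i, j - 1) * x $ (m + j - 1) else 0))"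
proof -
  have "(BB *\<^sub>v x) $ (m+i) = (\<Sum>q<m+n. BB $$ (m+i,q) * x $ q)" using mat_vec_sum[OF BB x] i by simp
  also have "\<dots> = (\<Sum>q<m. BB $$ (m+i,q) * x $ q) + (\<Sum>q<n. BB $$ (m+i,m+q) * x $ (m+q))" by (rule sum_split_add)
  also have "(\<Sum>q<m. BB $$ (m+i,q) * x $ q) = (\<Sum>q<m. (if q = 0 \<and> i = 0 then A $$ (0, j - 1) else 0) * x $ q)
      + (\<Sum>q<m. (if q = \<sigma> - 1 \<and> k \<le> i then A $$ (i, j - 1) else 0) * x $ q)"
    unfolding sum.distrib[symmetric] by (intro sum.cong) (use i in \<open>auto simp: BBL distrib_right\<close>)
  also have "\<dots> = (if i = 0 then A $$ (0, j - 1) * x $ 0 else 0) + (if k \<le> i then A $$ (i, j - 1) * x $ (\<sigma> - 1) else 0)"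
    by (subst sum_delta_c[where c = "\<lambda>_. A $$ (0, j - 1)"], simp, subst sum_delta_c[where c = "\<lambda>_. A $$ (i, j - 1)"], simp) (use \<sigma> r in auto)
  also have "(\<Sum>q<n. BB $$ (m+i,m+q) * x $ (m+q)) = (\<Sum>q<n. (if \<not> (q = j - 1 \<and> (i = 0 \<or> k \<le> i)) then A $$ (i, q) * x $ (m+q) else 0))"
    by (intro sum.cong) (use i j in \<open>auto simp: BBR\<close>)
  also have "\<dots> = (\<Sum>q<n. A $$ (i, q) * x $ (m+q)) - (if (i = 0 \<or> k \<le> i) \<and> j - 1 < n then A $$ (i, j - 1) * x $ (m + (j - 1)) else 0)"
    by (rule sum_excl)
  also have "(\<Sum>q<n. A $$ (i, q) * x $ (m+q)) = (A *\<^sub>v vec n (\<lambda>q. x $ (m+q))) $ i"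
    using i by (subst mat_vec_sum[OF A]) auto
  moreover have "j - 1 < n" "m + (j - 1) = m + j - 1" using j by auto
  ultimately show ?thesis by simp
qed

lemma col_top: assumes z: "z \<in> carrier_vec (m+n)" and q0: "q0 < m"
  shows "(transpose_mat BB *\<^sub>v z) $ q0 = (if 0 < q0 then \<alpha> q0 * z $ (q0 - 1) else 0)
     + (if q0 = \<sigma> - 1 then \<beta> * z $ (r - 1) else 0) + (if q0 = 0 then A $$ (0, j - 1) * z $ m else 0)
     + (if q0 = \<sigma> - 1 then (\<Sum>i<n. if k \<le> i then A $$ (i, j - 1) * z $ (m+i) else 0) else 0)"
proof -
  have BT: "transpose_mat BB \<in> carrier_mat (m+n) (m+n)" using BB by simp
  have "(transpose_mat BB *\<^sub>v z) $ q0 = (\<Sum>p<m+n. BB $$ (p,q0) * z $ p)"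
    using mat_vec_sum[OF BT z] q0 BB by simp
  also have "\<dots> = (\<Sum>p<m. BB $$ (p,q0) * z $ p) + (\<Sum>i<n. BB $$ (m+i,q0) * z $ (m+i))" by (rule sum_split_add)
  also have "(\<Sum>p<m. BB $$ (p,q0) * z $ p) = (\<Sum>p<m. (if p = q0 - 1 \<and> 0 < q0 then \<alpha> q0 else 0) * z $ p)
      + (\<Sum>p<m. (if p = r - 1 \<and> q0 = \<sigma> - 1 then \<beta> else 0) * z $ p)"
    unfolding sum.distrib[symmetric] by (intro sum.cong) (use q0 r in \<open>auto simp: BTL distrib_right\<close>)
  also have "\<dots> = (if 0 < q0 then \<alpha> q0 * z $ (q0 - 1) else 0) + (if q0 = \<sigma> - 1 then \<beta> * z $ (r - 1) else 0)"
    by (subst sum_delta_c[where c = "\<lambda>_. \<alpha> q0"], simp, subst sum_delta_c[where c = "\<lambda>_. \<beta>"], simp) (use q0 r in auto)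
  also have "(\<Sum>i<n. BB $$ (m+i,q0) * z $ (m+i)) = (\<Sum>i<n. (if i = 0 \<and> q0 = 0 then A $$ (0, j - 1) else 0) * z $ (m+i))
      + (\<Sum>i<n. (if q0 = \<sigma> - 1 then (if k \<le> i then A $$ (i, j - 1) * z $ (m+i) else 0) else 0))"
    unfolding sum.distrib[symmetric] by (intro sum.cong) (use q0 in \<open>auto simp: BBL distrib_right\<close>)
  also have "\<dots> = (if q0 = 0 then A $$ (0, j - 1) * z $ m else 0)
     + (if q0 = \<sigma> - 1 then (\<Sum>i<n. if k \<le> i then A $$ (i, j - 1) * z $ (m+i) else 0) else 0)"
    by (subst sum_delta_c[where c = "\<lambda>_. A $$ (0, j - 1)"], simp) (use j in auto)
  finally show ?thesis by simp
qed

lemma col_bot: assumes z: "z \<in> carrier_vec (m+n)" and q: "q < n"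
  shows "(transpose_mat BB *\<^sub>v z) $ (m+q) = (if q = j - 1 then \<mu> * z $ (m - 1) else 0)
     + ((transpose_mat A *\<^sub>v vec n (\<lambda>i. z $ (m+i))) $ q
        - (if q = j - 1 then (\<Sum>i<n. if i = 0 \<or> k \<le> i then A $$ (i, j - 1) * z $ (m+i) else 0) else 0))"
proof -
  have BT: "transpose_mat BB \<in> carrier_mat (m+n) (m+n)" using BB by simp
  have "(transpose_mat BB *\<^sub>v z) $ (m+q) = (\<Sum>p<m+n. BB $$ (p,m+q) * z $ p)"
    using mat_vec_sum[OF BT z] q BB by simp
  also have "\<dots> = (\<Sum>p<m. BB $$ (p,m+q) * z $ p) + (\<Sum>i<n. BB $$ (m+i,m+q) * z $ (m+i))" by (rule sum_split_add)
  also have "(\<Sum>p<m. BB $$ (p,m+q) * z $ p) = (\<Sum>p<m. (if p = m - 1 \<and> q = j - 1 then \<mu> else 0) * z $ p)"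
    by (intro sum.cong) (use q j in \<open>auto simp: BTR\<close>)
  also have "\<dots> = (if q = j - 1 then \<mu> * z $ (m - 1) else 0)"
    by (subst sum_delta_c[where c = "\<lambda>_. \<mu>"], simp) (use r in auto)
  also have "(\<Sum>i<n. BB $$ (m+i,m+q) * z $ (m+i)) = (\<Sum>i<n. A $$ (i, q) * z $ (m+i)
      - (if q = j - 1 then (if i = 0 \<or> k \<le> i then A $$ (i, j - 1) * z $ (m+i) else 0) else 0))"
    by (intro sum.cong) (use q j in \<open>auto simp: BBR\<close>)
  also have "\<dots> = (\<Sum>i<n. A $$ (i, q) * z $ (m+i))
      - (if q = j - 1 then (\<Sum>i<n. if i = 0 \<or> k \<le> i then A $$ (i, j - 1) * z $ (m+i) else 0) else 0)"
    by (simp add: sum_subtractf)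
  also have "(\<Sum>i<n. A $$ (i, q) * z $ (m+i)) = (transpose_mat A *\<^sub>v vec n (\<lambda>i. z $ (m+i))) $ q"
    using q A by (subst mat_vec_sum[of _ n n]) auto
  finally show ?thesis .
qed

end




lemma sum_or0: fixes f :: "nat \<Rightarrow> real" and n k :: nat
  assumes "0 < n" "1 \<le> k"
  shows "(\<Sum>i<n. if i = 0 \<or> k \<le> i then f i else 0) = f 0 + (\<Sum>i<n. if k \<le> i then f i else 0)"
proof -
  have "(\<Sum>i<n. if i = 0 \<or> k \<le> i then f i else 0) = (\<Sum>i<n. (if i = 0 then f i else 0) + (if k \<le> i then f i else 0))"
    using assms by (intro sum.cong) auto
  also have "\<dots> = f 0 + (\<Sum>i<n. if k \<le> i then f i else 0)" using assms by (simp add: sum.distrib)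
  finally show ?thesis .
qed

lemma generic_part:
  fixes A :: "real mat" and m n j k :: nat and tp :: "nat \<Rightarrow> nat \<Rightarrow> real"
    and \<alpha> zt :: "nat \<Rightarrow> real" and \<beta> \<mu> l c :: real and r \<sigma> :: nat and u v :: "real vec"
  assumes spec: "\<forall>p q. 1 \<le> p \<longrightarrow> p \<le> m + n \<longrightarrow> 1 \<le> q \<longrightarrow> q \<le> m + n
      \<longrightarrow> \<not> (m < p \<and> m < q \<and> \<not> inE m n j k p q) \<longrightarrow> tp p q = TPF A m n j k \<alpha> \<beta> r \<sigma> \<mu> p q"
    and r: "1 \<le> r" "r \<le> m" and \<sigma>: "1 \<le> \<sigma>" "\<sigma> \<le> m" and j: "1 \<le> j" "j \<le> n" and k: "1 \<le> k"
    and A: "A \<in> carrier_mat n n"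
    and simpleA: "order l (char_poly A) = 1"
    and u: "u \<in> carrier_vec n" "\<forall>i<n. u $ i > 0" "A *\<^sub>v u = l \<cdot>\<^sub>v u"
    and v: "v \<in> carrier_vec n" "\<forall>i<n. v $ i > 0" "transpose_mat A *\<^sub>v v = l \<cdot>\<^sub>v v"
    and cS: "c = A $$ (0, j - 1) * v $ 0 + (\<Sum>i<n. if k \<le> i then A $$ (i, j - 1) * v $ i else 0)"
    and R: "\<forall>p. 1 \<le> p \<longrightarrow> p \<le> m \<longrightarrow> (if p < m then \<alpha> p else 0) + (if p = r then \<beta> else 0) + (if p = m then \<mu> else 0) = l"
    and Cz: "\<forall>q. 1 \<le> q \<longrightarrow> q \<le> m \<longrightarrow> (if 2 \<le> q then \<alpha> (q - 1) * zt (q - 1) else 0) + (if q = \<sigma> then \<beta> * zt r else 0)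
        + (if q = 1 then A $$ (0, j - 1) * v $ 0 else 0) + (if q = \<sigma> then c - A $$ (0, j - 1) * v $ 0 else 0) = l * zt q"
    and Cm: "\<mu> * zt m = c"
    and K: "\<forall>x y0. (\<forall>p. 1 \<le> p \<longrightarrow> p \<le> m \<longrightarrow> (if p < m then \<alpha> p * x (Suc p) else 0) + (if p = r then \<beta> * x \<sigma> else 0)
        + (if p = m then \<mu> * y0 else 0) = l * x p) \<longrightarrow> (\<forall>p. 1 \<le> p \<longrightarrow> p \<le> m \<longrightarrow> x p = y0)"
    and ztpos: "\<forall>p. 1 \<le> p \<longrightarrow> p \<le> m \<longrightarrow> zt p > 0"
  shows "simple_eigenvalue (mkB A m n j k tp) l
    \<and> mkB A m n j k tp *\<^sub>v mkvec m n (\<lambda>_. u $ (j - 1)) u = l \<cdot>\<^sub>v mkvec m n (\<lambda>_. u $ (j - 1)) u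
    \<and> transpose_mat (mkB A m n j k tp) *\<^sub>v mkvec m n zt v = l \<cdot>\<^sub>v mkvec m n zt v
    \<and> algebraically_positive (mkB A m n j k tp)"
proof -
  let ?B = "mkB A m n j k tp"
  define w where "w = mkvec m n (\<lambda>_. u $ (j - 1)) u"
  define z where "z = mkvec m n zt v"
  note rt = row_top[OF spec r \<sigma> j k A]
  note rb = row_bot[OF spec r \<sigma> j k A]
  note ct = col_top[OF spec r \<sigma> j k A]
  note cb = col_bot[OF spec r \<sigma> j k A]
  have B: "?B \<in> carrier_mat (m+n) (m+n)" unfolding mkB_def by simp
  have w: "w \<in> carrier_vec (m+n)" and z: "z \<in> carrier_vec (m+n)" unfolding w_def z_def mkvec_def by auto
  have wt: "w $ p0 = u $ (j - 1)" if "p0 < m" for p0 using that unfolding w_def mkvec_def by simp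
  have wb: "w $ (m+i) = u $ i" if "i < n" for i using that unfolding w_def mkvec_def by simp
  have zt': "z $ p0 = zt (Suc p0)" if "p0 < m" for p0 using that unfolding z_def mkvec_def by simp
  have zb: "z $ (m+i) = v $ i" if "i < n" for i using that unfolding z_def mkvec_def by simp
  have jn: "j - 1 < n" "m + j - 1 = m + (j - 1)" using j by auto
  have m0: "0 < m" and n0: "0 < n" using r j by auto
  have wu: "vec n (\<lambda>q. w $ (m+q)) = u" using u(1) by (intro eq_vecI) (auto simp: wb)
  have zv: "vec n (\<lambda>q. z $ (m+q)) = v" using v(1) by (intro eq_vecI) (auto simp: zb)
  have split_idx: "\<forall>p0<m+n. P p0" if "\<And>p0. p0 < m \<Longrightarrow> P p0" "\<And>i. i < n \<Longrightarrow> P (m+i)" for P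
  proof (intro allI impI)
    fix p0 assume p0: "p0 < m + n"
    show "P p0"
    proof (cases "p0 < m")
      case True thus ?thesis using that(1) by simp
    next
      case False
      hence "p0 = m + (p0 - m)" "p0 - m < n" using p0 by auto
      thus ?thesis using that(2)[of "p0 - m"] by simp
    qed
  qed
  have Bw: "?B *\<^sub>v w = l \<cdot>\<^sub>v w"
  proof -
    have "\<forall>p0<m+n. (?B *\<^sub>v w) $ p0 = (l \<cdot>\<^sub>v w) $ p0"
    proof (rule split_idx)
      fix p0 assume p0: "p0 < m"
      have "(?B *\<^sub>v w) $ p0 = ((if Suc p0 < m then \<alpha> (Suc p0) else 0) + (if Suc p0 = r then \<beta> else 0)
          + (if Suc p0 = m then \<mu> else 0)) * u $ (j - 1)"
      proof -
        have a1: "(if Suc p0 < m then \<alpha> (Suc p0) * w $ Suc p0 else 0) = (if Suc p0 < m then \<alpha> (Suc p0) else 0) * u $ (j - 1)"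
          by (cases "Suc p0 < m") (simp_all add: wt)
        have a2: "w $ (\<sigma> - 1) = u $ (j - 1)" using \<sigma> by (simp add: wt)
        have a3: "w $ (m + j - 1) = u $ (j - 1)" using jn wb[of "j - 1"] by simp
        show ?thesis unfolding rt[OF w p0] a1 a2 a3 by (simp add: distrib_right)
      qed
      also have "\<dots> = l * u $ (j - 1)" using R[rule_format, of "Suc p0"] p0 by simp
      finally show "(?B *\<^sub>v w) $ p0 = (l \<cdot>\<^sub>v w) $ p0" using p0 w by (simp add: wt)
    next
      fix i assume i: "i < n"
      have "(?B *\<^sub>v w) $ (m+i) = (A *\<^sub>v u) $ i"
      proof -
        have a1: "w $ 0 = u $ (j - 1)" "w $ (\<sigma> - 1) = u $ (j - 1)" using m0 \<sigma> by (simp_all add: wt)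
        have a3: "w $ (m + j - 1) = u $ (j - 1)" using jn wb[of "j - 1"] by simp
        show ?thesis unfolding rb[OF w i] wu a1 a3 using k by (cases "i = 0") auto
      qed
      thus "(?B *\<^sub>v w) $ (m+i) = (l \<cdot>\<^sub>v w) $ (m+i)" using i u w by (simp add: wb)
    qed
    thus ?thesis using B w by (intro eq_vecI) auto
  qed
  have Sv: "(\<Sum>i<n. if k \<le> i then A $$ (i, j - 1) * z $ (m+i) else 0) = c - A $$ (0, j - 1) * v $ 0"
  proof -
    have "(\<Sum>i<n. if k \<le> i then A $$ (i, j - 1) * z $ (m+i) else 0) = (\<Sum>i<n. if k \<le> i then A $$ (i, j - 1) * v $ i else 0)"
      by (intro sum.cong) (auto simp: zb)
    thus ?thesis using cS by simp
  qed
  have Bz: "transpose_mat ?B *\<^sub>v z = l \<cdot>\<^sub>v z"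
  proof -
    have "\<forall>p0<m+n. (transpose_mat ?B *\<^sub>v z) $ p0 = (l \<cdot>\<^sub>v z) $ p0"
    proof (rule split_idx)
      fix q0 assume q0: "q0 < m"
      have b1: "(if 0 < q0 then \<alpha> q0 * z $ (q0 - 1) else 0) = (if 2 \<le> Suc q0 then \<alpha> (Suc q0 - 1) * zt (Suc q0 - 1) else 0)"
        using q0 by (cases "0 < q0") (simp_all add: zt')
      have b2: "z $ (r - 1) = zt r" using r zt'[of "r - 1"] by simp
      have b3: "z $ m = v $ 0" using zb[of 0] j by simp
      have "(transpose_mat ?B *\<^sub>v z) $ q0 = (if 2 \<le> Suc q0 then \<alpha> (Suc q0 - 1) * zt (Suc q0 - 1) else 0)
         + (if Suc q0 = \<sigma> then \<beta> * zt r else 0) + (if Suc q0 = 1 then A $$ (0, j - 1) * v $ 0 else 0)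
         + (if Suc q0 = \<sigma> then c - A $$ (0, j - 1) * v $ 0 else 0)"
        unfolding ct[OF z q0] b1 b2 b3 Sv using \<sigma> by auto
      also have "\<dots> = l * zt (Suc q0)" using Cz[rule_format, of "Suc q0"] q0 by simp
      finally show "(transpose_mat ?B *\<^sub>v z) $ q0 = (l \<cdot>\<^sub>v z) $ q0" using q0 z by (simp add: zt')
    next
      fix q assume q: "q < n"
      have b1: "z $ (m - 1) = zt m" using m0 zt'[of "m - 1"] by simp
      have b2: "(\<Sum>i<n. if i = 0 \<or> k \<le> i then A $$ (i, j - 1) * z $ (m+i) else 0) = c"
        unfolding sum_or0[OF n0 k] Sv using zb[of 0] n0 by simp
      have "(transpose_mat ?B *\<^sub>v z) $ (m+q) = (transpose_mat A *\<^sub>v v) $ q"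
        unfolding cb[OF z q] zv b1 b2 using Cm by simp
      thus "(transpose_mat ?B *\<^sub>v z) $ (m+q) = (l \<cdot>\<^sub>v z) $ (m+q)" using q v z by (simp add: zb)
    qed
    thus ?thesis using B z by (intro eq_vecI) auto
  qed
  obtain N' where N': "m + n = Suc N'" using m0 by (cases "m + n") auto
  have u0: "u $ 0 \<noteq> 0" using u n0 by auto
  have uu: "A \<in> carrier_mat (Suc (n - 1)) (Suc (n - 1))" "u \<in> carrier_vec (Suc (n - 1))" using A u n0 by auto
  have ker: "\<exists>a. x = a \<cdot>\<^sub>v w" if x: "x \<in> carrier_vec (m+n)" and Bx: "?B *\<^sub>v x = l \<cdot>\<^sub>v x" for x
  proof -
    define y0 where "y0 = x $ (m + j - 1)"
    define xf where "xf p = x $ (p - 1)" for p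
    have top: "\<forall>p. 1 \<le> p \<longrightarrow> p \<le> m \<longrightarrow> (if p < m then \<alpha> p * xf (Suc p) else 0) + (if p = r then \<beta> * xf \<sigma> else 0)
        + (if p = m then \<mu> * y0 else 0) = l * xf p"
    proof (intro allI impI)
      fix p assume p: "1 \<le> p" "p \<le> m"
      hence p0: "p - 1 < m" by simp
      have sp: "Suc (p - 1) = p" using p by simp
      have "(?B *\<^sub>v x) $ (p - 1) = l * xf p" using Bx p0 x unfolding xf_def by simp
      hence "(if p < m then \<alpha> p * x $ p else 0) + (if p = r then \<beta> * x $ (\<sigma> - 1) else 0)
        + (if p = m then \<mu> * x $ (m + j - 1) else 0) = l * xf p" unfolding rt[OF x p0] sp .
      thus "(if p < m then \<alpha> p * xf (Suc p) else 0) + (if p = r then \<beta> * xf \<sigma> else 0)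
        + (if p = m then \<mu> * y0 else 0) = l * xf p"
        unfolding xf_def y0_def diff_Suc_1 .
    qed
    have xt: "x $ p0 = y0" if "p0 < m" for p0
    proof -
      have "\<forall>p. 1 \<le> p \<longrightarrow> p \<le> m \<longrightarrow> xf p = y0"
        using K[THEN HOL.spec[of _ xf], THEN HOL.spec[of _ y0]] top by blast
      thus ?thesis using that by (auto simp: xf_def dest!: HOL.spec[of _ "Suc p0"])
    qed
    define y where "y = vec n (\<lambda>q. x $ (m+q))"
    have y: "y \<in> carrier_vec n" unfolding y_def by simp
    have Ay: "A *\<^sub>v y = l \<cdot>\<^sub>v y"
    proof (rule eq_vecI)
      fix i assume "i < dim_vec (l \<cdot>\<^sub>v y)"
      hence i: "i < n" unfolding y_def by simp
      have "(?B *\<^sub>v x) $ (m+i) = (A *\<^sub>v y) $ i"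
      proof -
        have a1: "x $ 0 = y0" "x $ (\<sigma> - 1) = y0" using m0 \<sigma> by (simp_all add: xt)
        show ?thesis unfolding rb[OF x i] y_def[symmetric] a1 y0_def[symmetric] using k by (cases "i = 0") auto
      qed
      thus "(A *\<^sub>v y) $ i = (l \<cdot>\<^sub>v y) $ i" using Bx i x by (simp add: y_def)
    qed (use A y in auto)
    have yu: "y = (y $ 0 / u $ 0) \<cdot>\<^sub>v u"
      using kernel_simple[OF uu u0 _ _ _ Ay] u(3) simpleA y n0 by simp
    define a where "a = y $ 0 / u $ 0"
    have yi: "x $ (m + i) = a * u $ i" if "i < n" for i
      using arg_cong[OF yu, of "\<lambda>v. v $ i"] that u unfolding a_def y_def by simp
    show ?thesis
    proof (intro exI[of _ a] eq_vecI)
      show "dim_vec x = dim_vec (a \<cdot>\<^sub>v w)" using x w by simp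
      fix p0 assume "p0 < dim_vec (a \<cdot>\<^sub>v w)"
      hence p0: "p0 < m + n" using w by simp
      show "x $ p0 = (a \<cdot>\<^sub>v w) $ p0"
      proof (cases "p0 < m")
        case True
        have "x $ p0 = y0" using xt True by simp
        also have "\<dots> = a * u $ (j - 1)" unfolding y0_def using yi[of "j - 1"] jn by simp
        finally show ?thesis using True w p0 by (simp add: wt)
      next
        case False
        hence "p0 = m + (p0 - m)" "p0 - m < n" using p0 by auto
        thus ?thesis using yi[of "p0 - m"] w wb[of "p0 - m"] by (metis index_smult_vec(1) p0 carrier_vecD)
      qed
    qed
  qed
  have wpos: "\<forall>i<m+n. w $ i > 0"
  proof (intro allI impI)
    fix i assume i: "i < m + n"
    show "w $ i > 0"
    proof (cases "i < m")
      case True thus ?thesis using wt u jn by simp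
    next
      case False
      hence "i = m + (i - m)" "i - m < n" using i by auto
      thus ?thesis using wb[of "i - m"] u by metis
    qed
  qed
  have zpos: "\<forall>i<m+n. z $ i > 0"
  proof (intro allI impI)
    fix i assume i: "i < m + n"
    show "z $ i > 0"
    proof (cases "i < m")
      case True thus ?thesis using zt' ztpos by simp
    next
      case False
      hence "i = m + (i - m)" "i - m < n" using i by auto
      thus ?thesis using zb[of "i - m"] v by metis
    qed
  qed
  have zw: "z \<bullet> w > 0"
  proof -
    have "z \<bullet> w = (\<Sum>i<m+n. z $ i * w $ i)" unfolding scalar_prod_def using w by (simp add: atLeast0LessThan)
    also have "\<dots> > 0" by (rule sum_pos) (use wpos zpos m0 in auto)
    finally show ?thesis .
  qed
  have B': "?B \<in> carrier_mat (Suc N') (Suc N')" and w': "w \<in> carrier_vec (Suc N')" and z': "z \<in> carrier_vec (Suc N')"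
    using B w z N' by auto
  have w0: "w $ 0 \<noteq> 0" using wpos m0 by auto
  have ord: "order l (char_poly ?B) = 1"
    by (rule simple_from_kernel[OF B' w' w0 Bw _ z' Bz]) (use ker zw N' in auto)
  have ap: "algebraically_positive ?B"
    by (rule alg_pos[OF B w z wpos zpos Bz _ ord]) (use ker m0 in auto)
  show ?thesis using ord Bw Bz ap unfolding simple_eigenvalue_def w_def z_def by simp
qed




lemma sum_reidx: fixes f :: "nat \<Rightarrow> real" assumes k: "1 \<le> k"
  shows "(\<Sum>i = 1..n - k. f (k + i - 1)) = (\<Sum>i<n. if k \<le> i then f i else 0)"
proof (induct n)
  case 0 thus ?case by simp
next
  case (Suc n)
  show ?case
  proof (cases "k \<le> n")
    case True
    hence e: "Suc n - k = Suc (n - k)" by simp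
    have "(\<Sum>i = 1..Suc n - k. f (k + i - 1)) = (\<Sum>i = 1..n - k. f (k + i - 1)) + f n"
      unfolding e using True by (simp add: sum.cl_ivl_Suc)
    thus ?thesis using Suc True by simp
  next
    case False
    hence "Suc n - k = 0" "n - k = 0" by auto
    thus ?thesis using Suc False by simp
  qed
qed

lemma chain_eq: assumes h: "\<And>p. a \<le> p \<Longrightarrow> p < b \<Longrightarrow> x (Suc p) = x p"
  shows "a \<le> p \<Longrightarrow> p \<le> b \<Longrightarrow> x p = x b"
proof (induct "b - p" arbitrary: p)
  case 0 thus ?case by simp
next
  case (Suc d)
  hence pb: "p < b" "d = b - Suc p" by auto
  have "x (Suc p) = x b" using Suc.hyps(1)[OF pb(2)] Suc.prems pb by simp
  moreover have "x (Suc p) = x p" using h Suc.prems pb by simp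
  ultimately show ?case by simp
qed

lemma spec1: assumes j: "1 \<le> j" and s: "1 \<le> s" "s \<le> m" and k: "1 \<le> k"
  shows "\<forall>p q. 1 \<le> p \<longrightarrow> p \<le> m + n \<longrightarrow> 1 \<le> q \<longrightarrow> q \<le> m + n
      \<longrightarrow> \<not> (m < p \<and> m < q \<and> \<not> inE m n j k p q) \<longrightarrow> top1 A l m n j k s p q = TPF A m n j k (\<lambda>_. l) 0 1 s l p q"
proof (intro allI impI)
  fix p q assume pq: "1 \<le> p" "p \<le> m + n" "1 \<le> q" "q \<le> m + n" "\<not> (m < p \<and> m < q \<and> \<not> inE m n j k p q)"
  have sd: "(q = p + 1 \<and> 1 \<le> p \<and> p \<le> m - 1) = (q = Suc p \<and> p < m)" using pq by auto
  show "top1 A l m n j k s p q = TPF A m n j k (\<lambda>_. l) 0 1 s l p q"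
  proof (cases "p \<le> m")
    case p: True
    show ?thesis
    proof (cases "q \<le> m")
      case q: True
      have c: "((p, q) = (m, m + j)) = False" "((p, q) = (m + 1, 1)) = False"
        "(q = s \<and> m + k + 1 \<le> p \<and> p \<le> m + n) = False" using p q j by auto
      show ?thesis unfolding top1_def TPF_def c sd using p q by simp
    next
      case q: False
      have c: "(q = p + 1 \<and> 1 \<le> p \<and> p \<le> m - 1) = False" "((p, q) = (m + 1, 1)) = False"
        "(q = s \<and> m + k + 1 \<le> p \<and> p \<le> m + n) = False" using p q s by auto
      have d: "((p, q) = (m, m + j)) = (p = m \<and> q = m + j)" by simp
      show ?thesis unfolding top1_def TPF_def c d using p q by simp
    qed
  next
    case p: False
    have c0: "(q = p + 1 \<and> 1 \<le> p \<and> p \<le> m - 1) = False" "((p, q) = (m, m + j)) = False" using p by auto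
    show ?thesis
    proof (cases "q \<le> m")
      case q: True
      have d: "((p, q) = (m + 1, 1)) = (p = m + 1 \<and> q = 1)" "(q = s \<and> m + k + 1 \<le> p \<and> p \<le> m + n) = (q = s \<and> m + k + 1 \<le> p)"
        using pq by auto
      show ?thesis unfolding top1_def TPF_def c0 d using p q by simp
    next
      case q: False
      have c: "((p, q) = (m + 1, 1)) = False" "(q = s \<and> m + k + 1 \<le> p \<and> p \<le> m + n) = False" using q s by auto
      show ?thesis unfolding top1_def TPF_def c0 c using p q by simp
    qed
  qed
qed

lemma spec2: assumes "1 \<le> j" "1 \<le> s" "s < m" "1 \<le> t" "t \<le> m" "t \<noteq> s + 1"
  shows "\<forall>p q. 1 \<le> p \<longrightarrow> p \<le> m + n \<longrightarrow> 1 \<le> q \<longrightarrow> q \<le> m + n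
      \<longrightarrow> \<not> (m < p \<and> m < q \<and> \<not> inE m n j k p q) \<longrightarrow> top2 A l e m n j k s t p q
        = TPF A m n j k (\<lambda>p. if p = s then e * l else l) ((1 - e) * l) s t l p q"
proof (intro allI impI)
  fix p q assume pq: "1 \<le> p" "p \<le> m + n" "1 \<le> q" "q \<le> m + n" "\<not> (m < p \<and> m < q \<and> \<not> inE m n j k p q)"
  show "top2 A l e m n j k s t p q = TPF A m n j k (\<lambda>p. if p = s then e * l else l) ((1 - e) * l) s t l p q"
  proof (cases "p \<le> m")
    case p: True
    show ?thesis
    proof (cases "q \<le> m")
      case True thus ?thesis using p pq assms unfolding top2_def TPF_def by auto
    next
      case False thus ?thesis using p pq assms unfolding top2_def TPF_def by auto
    qed
  next
    case p: False
    show ?thesis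
    proof (cases "q \<le> m")
      case True thus ?thesis using p pq assms unfolding top2_def TPF_def by auto
    next
      case False thus ?thesis using p pq assms unfolding top2_def TPF_def inE_def by auto
    qed
  qed
qed

lemma spec3: assumes "1 \<le> j" "1 \<le> t" "t \<le> m"
  shows "\<forall>p q. 1 \<le> p \<longrightarrow> p \<le> m + n \<longrightarrow> 1 \<le> q \<longrightarrow> q \<le> m + n
      \<longrightarrow> \<not> (m < p \<and> m < q \<and> \<not> inE m n j k p q) \<longrightarrow> top3 A l e m n j k t p q
        = TPF A m n j k (\<lambda>_. l) ((1 - e) * l) m t (e * l) p q"
proof (intro allI impI)
  fix p q assume pq: "1 \<le> p" "p \<le> m + n" "1 \<le> q" "q \<le> m + n" "\<not> (m < p \<and> m < q \<and> \<not> inE m n j k p q)"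
  show "top3 A l e m n j k t p q = TPF A m n j k (\<lambda>_. l) ((1 - e) * l) m t (e * l) p q"
  proof (cases "p \<le> m")
    case p: True
    show ?thesis
    proof (cases "q \<le> m")
      case True thus ?thesis using p pq assms unfolding top3_def TPF_def by auto
    next
      case False thus ?thesis using p pq assms unfolding top3_def TPF_def by auto
    qed
  next
    case p: False
    show ?thesis
    proof (cases "q \<le> m")
      case True thus ?thesis using p pq assms unfolding top3_def TPF_def by auto
    next
      case False thus ?thesis using p pq assms unfolding top3_def TPF_def inE_def by auto
    qed
  qed
qed




context
  fixes A :: "real mat" and u v :: "real vec" and l c :: real and n m j k :: nat
  assumes nm: "n \<ge> 1" "m \<ge> 1"
    and A: "A \<in> carrier_mat n n"
    and j: "1 \<le> j" "j \<le> n" and a1j: "A $$ (0, j - 1) > 0"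
    and lpos: "l > 0" and simple: "simple_eigenvalue A l"
    and u: "u \<in> carrier_vec n" "\<forall>i<n. u $ i > 0" "A *\<^sub>v u = l \<cdot>\<^sub>v u"
    and v: "v \<in> carrier_vec n" "\<forall>i<n. v $ i > 0" "transpose_mat A *\<^sub>v v = l \<cdot>\<^sub>v v"
    and k: "1 \<le> k" "k \<le> n"
    and cS: "c = A $$ (0, j - 1) * v $ 0 + (\<Sum>i<n. if k \<le> i then A $$ (i, j - 1) * v $ i else 0)"
    and cpos: "c > 0"
begin

lemma simpleA: "order l (char_poly A) = 1" using simple unfolding simple_eigenvalue_def .

lemma av_pos: "A $$ (0, j - 1) * v $ 0 > 0" using a1j v nm by auto

lemma part1: assumes s: "1 \<le> s" "s \<le> m"
  shows "simple_eigenvalue (mkB A m n j k (top1 A l m n j k s)) l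
    \<and> mkB A m n j k (top1 A l m n j k s) *\<^sub>v mkvec m n (\<lambda>_. u $ (j - 1)) u = l \<cdot>\<^sub>v mkvec m n (\<lambda>_. u $ (j - 1)) u
    \<and> transpose_mat (mkB A m n j k (top1 A l m n j k s)) *\<^sub>v mkvec m n (\<lambda>i. if i \<le> s - 1 then A $$ (0, j - 1) * v $ 0 / l else c / l) v
       = l \<cdot>\<^sub>v mkvec m n (\<lambda>i. if i \<le> s - 1 then A $$ (0, j - 1) * v $ 0 / l else c / l) v
    \<and> algebraically_positive (mkB A m n j k (top1 A l m n j k s))"
proof -
  let ?a = "A $$ (0, j - 1) * v $ 0"
  define zt where "zt i = (if i \<le> s - 1 then ?a / l else c / l)" for i
  have r: "1 \<le> (1::nat)" "1 \<le> m" using nm by auto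
  have R: "\<forall>p. 1 \<le> p \<longrightarrow> p \<le> m \<longrightarrow> (if p < m then l else 0) + (if p = 1 then 0 else 0) + (if p = m then l else 0) = l"
    by auto
  have Cz: "\<forall>q. 1 \<le> q \<longrightarrow> q \<le> m \<longrightarrow> (if 2 \<le> q then l * zt (q - 1) else 0) + (if q = s then 0 * zt 1 else 0)
        + (if q = 1 then ?a else 0) + (if q = s then c - ?a else 0) = l * zt q"
  proof (intro allI impI)
    fix q :: nat assume q: "1 \<le> q" "q \<le> m"
    show "(if 2 \<le> q then l * zt (q - 1) else 0) + (if q = s then 0 * zt 1 else 0)
        + (if q = 1 then ?a else 0) + (if q = s then c - ?a else 0) = l * zt q"
    proof (cases "q = 1")
      case True thus ?thesis using lpos s by (cases "s = 1") (auto simp: zt_def)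
    next
      case False
      hence q2: "2 \<le> q" using q by simp
      show ?thesis
      proof (cases "q < s")
        case True thus ?thesis using lpos q2 by (auto simp: zt_def)
      next
        case False
        thus ?thesis using lpos q2 by (cases "q = s") (auto simp: zt_def)
      qed
    qed
  qed
  have Cm: "l * zt m = c" using lpos s by (auto simp: zt_def)
  have K: "\<forall>x y0. (\<forall>p. 1 \<le> p \<longrightarrow> p \<le> m \<longrightarrow> (if p < m then l * x (Suc p) else 0) + (if p = 1 then 0 * x s else 0)
        + (if p = m then l * y0 else 0) = l * x p) \<longrightarrow> (\<forall>p. 1 \<le> p \<longrightarrow> p \<le> m \<longrightarrow> x p = y0)"
  proof (intro allI impI)
    fix x :: "nat \<Rightarrow> real" and y0 p
    assume H: "\<forall>p. 1 \<le> p \<longrightarrow> p \<le> m \<longrightarrow> (if p < m then l * x (Suc p) else 0) + (if p = 1 then 0 * x s else 0)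
        + (if p = m then l * y0 else 0) = l * x p" and p: "1 \<le> p" "p \<le> m"
    have st: "x (Suc p') = x p'" if "1 \<le> p'" "p' < m" for p'
      using H[rule_format, of p'] that lpos by (cases "p' = 1") auto
    have "x m = y0" using H[rule_format, of m] nm lpos by (cases "m = 1") auto
    moreover have "x p = x m" by (rule chain_eq[of 1 m x]) (use st p in auto)
    ultimately show "x p = y0" by simp
  qed
  have ztpos: "\<forall>p. 1 \<le> p \<longrightarrow> p \<le> m \<longrightarrow> zt p > 0" using av_pos lpos cpos by (auto simp: zt_def)
  have g: "simple_eigenvalue (mkB A m n j k (top1 A l m n j k s)) l
    \<and> mkB A m n j k (top1 A l m n j k s) *\<^sub>v mkvec m n (\<lambda>_. u $ (j - 1)) u = l \<cdot>\<^sub>v mkvec m n (\<lambda>_. u $ (j - 1)) u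
    \<and> transpose_mat (mkB A m n j k (top1 A l m n j k s)) *\<^sub>v mkvec m n zt v = l \<cdot>\<^sub>v mkvec m n zt v
    \<and> algebraically_positive (mkB A m n j k (top1 A l m n j k s))"
    by (rule generic_part[OF spec1[OF j(1) s k(1)] r s j k(1) A simpleA u v cS R _ Cm K ztpos])
      (use Cz in simp)
  thus ?thesis unfolding zt_def .
qed

lemma lowsum:
  assumes spec: "\<forall>p q. 1 \<le> p \<longrightarrow> p \<le> m + n \<longrightarrow> 1 \<le> q \<longrightarrow> q \<le> m + n
      \<longrightarrow> \<not> (m < p \<and> m < q \<and> \<not> inE m n j k p q) \<longrightarrow> tp p q = TPF A m n j k \<alpha> \<beta> r \<sigma> \<mu> p q"
    and r: "1 \<le> r" "r \<le> m" and \<sigma>: "1 \<le> \<sigma>" "\<sigma> \<le> m"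
  shows "(\<Sum>i = 1..n - k. mkB A m n j k tp $$ (m + k + i - 1, \<sigma> - 1) * mkvec m n zt v $ (m + k + i - 1))
     = c - A $$ (0, j - 1) * v $ 0"
proof -
  have "(\<Sum>i = 1..n - k. mkB A m n j k tp $$ (m + k + i - 1, \<sigma> - 1) * mkvec m n zt v $ (m + k + i - 1))
      = (\<Sum>i = 1..n - k. A $$ (k + i - 1, j - 1) * v $ (k + i - 1))"
  proof (intro sum.cong refl)
    fix i assume i: "i \<in> {1..n - k}"
    have p0: "m \<le> m + k + i - 1" "m + k + i - 1 < m + n" using i k by auto
    have ar: "(m + k + i - 1 = m) = False" "(m + k \<le> m + k + i - 1) = True" "m + k + i - 1 - m = k + i - 1"
      "(m + k + i - 1 < m) = False" "(\<sigma> - 1 < m) = True"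
      using i k \<sigma> by auto
    have "mkB A m n j k tp $$ (m + k + i - 1, \<sigma> - 1) = A $$ (k + i - 1, j - 1)"
      using B_BL[OF spec r \<sigma> j k(1) p0 ar(5)[THEN eqTrueE]] unfolding ar by simp
    moreover have "mkvec m n zt v $ (m + k + i - 1) = v $ (k + i - 1)"
      unfolding mkvec_def index_vec[OF p0(2)] ar(4) ar(3) if_False ..
    ultimately show "mkB A m n j k tp $$ (m + k + i - 1, \<sigma> - 1) * mkvec m n zt v $ (m + k + i - 1)
      = A $$ (k + i - 1, j - 1) * v $ (k + i - 1)" by simp
  qed
  also have "\<dots> = (\<Sum>i<n. if k \<le> i then A $$ (i, j - 1) * v $ i else 0)"
    using sum_reidx[OF k(1), of "\<lambda>i. A $$ (i, j - 1) * v $ i" n] by simp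
  finally show ?thesis using cS by simp
qed

lemma part2: assumes s: "1 \<le> s" "s \<le> m - 1" and t: "1 \<le> t" "t \<le> m" "t \<noteq> s + 1"
    and e: "0 < e" "e < 1"
  defines "zt \<equiv> (\<lambda>i. if t \<le> s then (if i \<le> t - 1 then A $$ (0, j - 1) * v $ 0 / l else if i \<le> s then c / (e * l) else c / l)
                   else (if i \<le> s then A $$ (0, j - 1) * v $ 0 / l else if i \<le> t - 1 then e * A $$ (0, j - 1) * v $ 0 / l else c / l))"
  shows "simple_eigenvalue (mkB A m n j k (top2 A l e m n j k s t)) l
    \<and> mkB A m n j k (top2 A l e m n j k s t) *\<^sub>v mkvec m n (\<lambda>_. u $ (j - 1)) u = l \<cdot>\<^sub>v mkvec m n (\<lambda>_. u $ (j - 1)) u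
    \<and> transpose_mat (mkB A m n j k (top2 A l e m n j k s t)) *\<^sub>v mkvec m n zt v = l \<cdot>\<^sub>v mkvec m n zt v
    \<and> algebraically_positive (mkB A m n j k (top2 A l e m n j k s t))
    \<and> mkB A m n j k (top2 A l e m n j k s t) $$ (s - 1, t - 1) * mkvec m n zt v $ (s - 1)
      + (\<Sum>i = 1..n - k. mkB A m n j k (top2 A l e m n j k s t) $$ (m + k + i - 1, t - 1) * mkvec m n zt v $ (m + k + i - 1))
      = (if t \<le> s then c / e - A $$ (0, j - 1) * v $ 0 else c - e * A $$ (0, j - 1) * v $ 0)"
proof -
  let ?a = "A $$ (0, j - 1) * v $ 0"
  define \<alpha> where "\<alpha> p = (if p = s then e * l else l)" for p
  have s': "1 \<le> s" "s \<le> m" "s < m" using s nm by auto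
  have sp: "\<forall>p q. 1 \<le> p \<longrightarrow> p \<le> m + n \<longrightarrow> 1 \<le> q \<longrightarrow> q \<le> m + n
      \<longrightarrow> \<not> (m < p \<and> m < q \<and> \<not> inE m n j k p q) \<longrightarrow> top2 A l e m n j k s t p q
        = TPF A m n j k \<alpha> ((1 - e) * l) s t l p q"
    unfolding \<alpha>_def by (rule spec2[OF j(1) s'(1) s'(3) t])
  have R: "\<forall>p. 1 \<le> p \<longrightarrow> p \<le> m \<longrightarrow> (if p < m then \<alpha> p else 0) + (if p = s then (1 - e) * l else 0) + (if p = m then l else 0) = l"
    using s' by (auto simp: \<alpha>_def algebra_simps)
  have zts: "zt s = (if t \<le> s then c / (e * l) else ?a / l)" unfolding zt_def using t by auto
  have Cz: "\<forall>q. 1 \<le> q \<longrightarrow> q \<le> m \<longrightarrow> (if 2 \<le> q then \<alpha> (q - 1) * zt (q - 1) else 0) + (if q = t then (1 - e) * l * zt s else 0)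
        + (if q = 1 then ?a else 0) + (if q = t then c - ?a else 0) = l * zt q"
  proof (intro allI impI)
    fix q :: nat assume q: "1 \<le> q" "q \<le> m"
    show "(if 2 \<le> q then \<alpha> (q - 1) * zt (q - 1) else 0) + (if q = t then (1 - e) * l * zt s else 0)
        + (if q = 1 then ?a else 0) + (if q = t then c - ?a else 0) = l * zt q"
    proof (cases "t \<le> s")
      case ts: True
      show ?thesis
      proof (cases "q < t")
        case True thus ?thesis using ts q lpos by (cases "q = 1") (auto simp: zt_def \<alpha>_def)
      next
        case False
        show ?thesis
        proof (cases "q = t")
          case True
          have "(if 2 \<le> q then \<alpha> (q - 1) * zt (q - 1) else 0) + (if q = 1 then ?a else 0) = ?a"
            using True ts q lpos by (cases "q = 1") (auto simp: zt_def \<alpha>_def)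
          thus ?thesis using True ts q lpos e zts by (auto simp: zt_def field_simps)
        next
          case False
          hence "t < q" "2 \<le> q" using \<open>\<not> q < t\<close> t by auto
          thus ?thesis using ts q lpos e False by (cases "q \<le> s"; cases "q = s + 1") (auto simp: zt_def \<alpha>_def field_simps)
        qed
      qed
    next
      case ts: False
      show ?thesis
      proof (cases "q \<le> s")
        case True thus ?thesis using ts q lpos by (cases "q = 1") (auto simp: zt_def \<alpha>_def)
      next
        case False
        hence q2: "2 \<le> q" "s < q" using s' by auto
        show ?thesis
        proof (cases "q = t")
          case True
          have "\<alpha> (q - 1) * zt (q - 1) = e * ?a" using True ts t q2 lpos by (auto simp: zt_def \<alpha>_def)
          thus ?thesis using True ts q2 lpos e zts by (auto simp: zt_def field_simps)
        next
          case False
          thus ?thesis using ts q q2 lpos e by (cases "q = s + 1"; cases "q < t") (auto simp: zt_def \<alpha>_def field_simps)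
        qed
      qed
    qed
  qed
  have Cm: "l * zt m = c" using lpos s' t unfolding zt_def by auto
  have K: "\<forall>x y0. (\<forall>p. 1 \<le> p \<longrightarrow> p \<le> m \<longrightarrow> (if p < m then \<alpha> p * x (Suc p) else 0) + (if p = s then (1 - e) * l * x t else 0)
        + (if p = m then l * y0 else 0) = l * x p) \<longrightarrow> (\<forall>p. 1 \<le> p \<longrightarrow> p \<le> m \<longrightarrow> x p = y0)"
  proof (intro allI impI)
    fix x :: "nat \<Rightarrow> real" and y0 p
    assume H: "\<forall>p. 1 \<le> p \<longrightarrow> p \<le> m \<longrightarrow> (if p < m then \<alpha> p * x (Suc p) else 0) + (if p = s then (1 - e) * l * x t else 0)
        + (if p = m then l * y0 else 0) = l * x p" and p: "1 \<le> p" "p \<le> m"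
    have st: "x (Suc p') = x p'" if "1 \<le> p'" "p' < m" "p' \<noteq> s" for p'
      using H[rule_format, of p'] that lpos by (simp add: \<alpha>_def)
    have xm: "x m = y0" using H[rule_format, of m] nm lpos s' by simp
    have hs: "e * l * x (Suc s) + (1 - e) * l * x t = l * x s" using H[rule_format, of s] s' by (simp add: \<alpha>_def)
    have up: "x p' = y0" if "s + 1 \<le> p'" "p' \<le> m" for p'
    proof -
      have "x p' = x m" by (rule chain_eq[of "s + 1" m x]) (use st that in auto)
      thus ?thesis using xm by simp
    qed
    have lo: "x p' = x s" if "1 \<le> p'" "p' \<le> s" for p'
      by (rule chain_eq[of 1 s x]) (use st that s' in auto)
    have xs: "x s = y0"
    proof (cases "t \<le> s")
      case True
      have "x t = x s" using lo[of t] True t by simp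
      moreover have "x (Suc s) = y0" using up[of "Suc s"] s' by simp
      ultimately have "e * l * y0 + (1 - e) * l * x s = l * x s" using hs by simp
      hence "e * l * (y0 - x s) = 0" by (simp add: algebra_simps)
      thus ?thesis using e lpos by simp
    next
      case False
      have "x t = y0" using up[of t] False t by simp
      moreover have "x (Suc s) = y0" using up[of "Suc s"] s' by simp
      ultimately have "l * y0 = l * x s" using hs by (simp add: algebra_simps)
      thus ?thesis using lpos by simp
    qed
    show "x p = y0"
    proof (cases "p \<le> s")
      case True thus ?thesis using lo[of p] p xs by simp
    next
      case False thus ?thesis using up[of p] p by simp
    qed
  qed
  have ztpos: "\<forall>p. 1 \<le> p \<longrightarrow> p \<le> m \<longrightarrow> zt p > 0"
  proof -
    have h: "e * ?a / l > 0" using av_pos lpos e by simp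
    show ?thesis using av_pos lpos cpos e h by (auto simp: zt_def mult.assoc)
  qed
  have r: "1 \<le> s" "s \<le> m" using s' by auto
  have g: "simple_eigenvalue (mkB A m n j k (top2 A l e m n j k s t)) l
    \<and> mkB A m n j k (top2 A l e m n j k s t) *\<^sub>v mkvec m n (\<lambda>_. u $ (j - 1)) u = l \<cdot>\<^sub>v mkvec m n (\<lambda>_. u $ (j - 1)) u
    \<and> transpose_mat (mkB A m n j k (top2 A l e m n j k s t)) *\<^sub>v mkvec m n zt v = l \<cdot>\<^sub>v mkvec m n zt v
    \<and> algebraically_positive (mkB A m n j k (top2 A l e m n j k s t))"
    by (rule generic_part[OF sp r t(1,2) j k(1) A simpleA u v cS R Cz Cm K ztpos])
  have B1: "mkB A m n j k (top2 A l e m n j k s t) $$ (s - 1, t - 1) = (1 - e) * l"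
    using B_TL[OF sp r t(1,2) j k(1), of "s - 1" "t - 1"] s' t by auto
  have z1: "mkvec m n zt v $ (s - 1) = zt s" using s' unfolding mkvec_def by auto
  have Q: "mkB A m n j k (top2 A l e m n j k s t) $$ (s - 1, t - 1) * mkvec m n zt v $ (s - 1)
      + (\<Sum>i = 1..n - k. mkB A m n j k (top2 A l e m n j k s t) $$ (m + k + i - 1, t - 1) * mkvec m n zt v $ (m + k + i - 1))
      = (if t \<le> s then c / e - ?a else c - e * A $$ (0, j - 1) * v $ 0)"
    unfolding B1 z1 lowsum[OF sp r t(1,2)] zts using lpos e by (auto simp: field_simps)
  show ?thesis using g Q by blast
qed

lemma part3: assumes t: "1 \<le> t" "t \<le> m" and e: "0 < e" "e < 1"
  defines "zt \<equiv> (\<lambda>i. if i \<le> t - 1 then A $$ (0, j - 1) * v $ 0 / l else c / (e * l))"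
  shows "simple_eigenvalue (mkB A m n j k (top3 A l e m n j k t)) l
    \<and> mkB A m n j k (top3 A l e m n j k t) *\<^sub>v mkvec m n (\<lambda>_. u $ (j - 1)) u = l \<cdot>\<^sub>v mkvec m n (\<lambda>_. u $ (j - 1)) u
    \<and> transpose_mat (mkB A m n j k (top3 A l e m n j k t)) *\<^sub>v mkvec m n zt v = l \<cdot>\<^sub>v mkvec m n zt v
    \<and> algebraically_positive (mkB A m n j k (top3 A l e m n j k t))
    \<and> mkB A m n j k (top3 A l e m n j k t) $$ (m - 1, t - 1) * mkvec m n zt v $ (m - 1)
      + (\<Sum>i = 1..n - k. mkB A m n j k (top3 A l e m n j k t) $$ (m + k + i - 1, t - 1) * mkvec m n zt v $ (m + k + i - 1))
      = c / e - A $$ (0, j - 1) * v $ 0"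
proof -
  let ?a = "A $$ (0, j - 1) * v $ 0"
  have m1: "1 \<le> m" "m \<le> m" using nm by auto
  have sp: "\<forall>p q. 1 \<le> p \<longrightarrow> p \<le> m + n \<longrightarrow> 1 \<le> q \<longrightarrow> q \<le> m + n
      \<longrightarrow> \<not> (m < p \<and> m < q \<and> \<not> inE m n j k p q) \<longrightarrow> top3 A l e m n j k t p q
        = TPF A m n j k (\<lambda>_. l) ((1 - e) * l) m t (e * l) p q"
    by (rule spec3[OF j(1) t])
  have R: "\<forall>p. 1 \<le> p \<longrightarrow> p \<le> m \<longrightarrow> (if p < m then l else 0) + (if p = m then (1 - e) * l else 0) + (if p = m then e * l else 0) = l"
    by (auto simp: algebra_simps)
  have ztm: "zt m = c / (e * l)" unfolding zt_def using t by auto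
  have Cz: "\<forall>q. 1 \<le> q \<longrightarrow> q \<le> m \<longrightarrow> (if 2 \<le> q then l * zt (q - 1) else 0) + (if q = t then (1 - e) * l * zt m else 0)
        + (if q = 1 then ?a else 0) + (if q = t then c - ?a else 0) = l * zt q"
  proof (intro allI impI)
    fix q :: nat assume q: "1 \<le> q" "q \<le> m"
    show "(if 2 \<le> q then l * zt (q - 1) else 0) + (if q = t then (1 - e) * l * zt m else 0)
        + (if q = 1 then ?a else 0) + (if q = t then c - ?a else 0) = l * zt q"
    proof (cases "q < t")
      case True thus ?thesis using q lpos by (cases "q = 1") (auto simp: zt_def)
    next
      case False
      show ?thesis
      proof (cases "q = t")
        case True
        have "(if 2 \<le> q then l * zt (q - 1) else 0) + (if q = 1 then ?a else 0) = ?a"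
          using True q lpos by (cases "q = 1") (auto simp: zt_def)
        thus ?thesis using True q lpos e ztm by (auto simp: zt_def field_simps)
      next
        case False
        hence "t < q" "2 \<le> q" using \<open>\<not> q < t\<close> t by auto
        thus ?thesis using q lpos e False by (auto simp: zt_def field_simps)
      qed
    qed
  qed
  have Cm: "e * l * zt m = c" using lpos e ztm by simp
  have K: "\<forall>x y0. (\<forall>p. 1 \<le> p \<longrightarrow> p \<le> m \<longrightarrow> (if p < m then l * x (Suc p) else 0) + (if p = m then (1 - e) * l * x t else 0)
        + (if p = m then e * l * y0 else 0) = l * x p) \<longrightarrow> (\<forall>p. 1 \<le> p \<longrightarrow> p \<le> m \<longrightarrow> x p = y0)"
  proof (intro allI impI)
    fix x :: "nat \<Rightarrow> real" and y0 p
    assume H: "\<forall>p. 1 \<le> p \<longrightarrow> p \<le> m \<longrightarrow> (if p < m then l * x (Suc p) else 0) + (if p = m then (1 - e) * l * x t else 0)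
        + (if p = m then e * l * y0 else 0) = l * x p" and p: "1 \<le> p" "p \<le> m"
    have st: "x (Suc p') = x p'" if "1 \<le> p'" "p' < m" for p'
      using H[rule_format, of p'] that lpos by simp
    have lo: "x p' = x m" if "1 \<le> p'" "p' \<le> m" for p'
      by (rule chain_eq[of 1 m x]) (use st that in auto)
    have hm: "(1 - e) * l * x t + e * l * y0 = l * x m" using H[rule_format, of m] nm by simp
    hence "(1 - e) * l * x m + e * l * y0 = l * x m" using lo[of t] t by simp
    hence "e * l * (y0 - x m) = 0" by (simp add: algebra_simps)
    hence "x m = y0" using e lpos by simp
    thus "x p = y0" using lo[of p] p by simp
  qed
  have ztpos: "\<forall>p. 1 \<le> p \<longrightarrow> p \<le> m \<longrightarrow> zt p > 0" using av_pos lpos cpos e by (auto simp: zt_def)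
  have g: "simple_eigenvalue (mkB A m n j k (top3 A l e m n j k t)) l
    \<and> mkB A m n j k (top3 A l e m n j k t) *\<^sub>v mkvec m n (\<lambda>_. u $ (j - 1)) u = l \<cdot>\<^sub>v mkvec m n (\<lambda>_. u $ (j - 1)) u
    \<and> transpose_mat (mkB A m n j k (top3 A l e m n j k t)) *\<^sub>v mkvec m n zt v = l \<cdot>\<^sub>v mkvec m n zt v
    \<and> algebraically_positive (mkB A m n j k (top3 A l e m n j k t))"
    by (rule generic_part[OF sp m1 t j k(1) A simpleA u v cS R Cz Cm K ztpos])
  have B1: "mkB A m n j k (top3 A l e m n j k t) $$ (m - 1, t - 1) = (1 - e) * l"
    using B_TL[OF sp m1 t j k(1), of "m - 1" "t - 1"] m1 t by auto
  have z1: "mkvec m n zt v $ (m - 1) = zt m" using m1 unfolding mkvec_def by auto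
  have Q: "mkB A m n j k (top3 A l e m n j k t) $$ (m - 1, t - 1) * mkvec m n zt v $ (m - 1)
      + (\<Sum>i = 1..n - k. mkB A m n j k (top3 A l e m n j k t) $$ (m + k + i - 1, t - 1) * mkvec m n zt v $ (m + k + i - 1))
      = c / e - ?a"
    unfolding B1 z1 lowsum[OF sp m1 t] ztm using lpos e by (auto simp: field_simps)
  show ?thesis using g Q by blast
qed

end


theorem theorem2p5:
  fixes A :: "real mat" and u v :: "real vec" and l eps c :: real and n m j k :: nat
  assumes eps: "0 < eps" "eps < 1"
    and nm: "n \<ge> 1" "m \<ge> 1"
    and A: "A \<in> carrier_mat n n"
    and j: "1 \<le> j" "j \<le> n" and a1j: "A $$ (0, j - 1) > 0"
    and lpos: "l > 0" and simple: "simple_eigenvalue A l"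
    and u: "u \<in> carrier_vec n" "\<forall>i<n. u $ i > 0" "A *\<^sub>v u = l \<cdot>\<^sub>v u"
    and v: "v \<in> carrier_vec n" "\<forall>i<n. v $ i > 0" "transpose_mat A *\<^sub>v v = l \<cdot>\<^sub>v v"
    and k: "1 \<le> k" "k \<le> n"
    and c_def: "c \<equiv> A $$ (0, j - 1) * v $ 0
                   + (\<Sum>i = 1..n - k. A $$ (k + i - 1, j - 1) * v $ (k + i - 1))"
    and cpos: "c > 0"
  shows
   "(let a = A $$ (0, j - 1); v1 = v $ 0;
         w = mkvec m n (\<lambda>_. u $ (j - 1)) u in
     (\<forall>s\<in>{1..m}.
        let B = mkB A m n j k (top1 A l m n j k s);
            z = mkvec m n (\<lambda>i. if i \<le> s - 1 then a * v1 / l else c / l) v in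
        simple_eigenvalue B l \<and> B *\<^sub>v w = l \<cdot>\<^sub>v w \<and> transpose_mat B *\<^sub>v z = l \<cdot>\<^sub>v z
        \<and> algebraically_positive B)
   \<and>
     (\<forall>s\<in>{1..m - 1}. \<forall>t\<in>{1..m} - {s + 1}.
        let Bf = (\<lambda>e. mkB A m n j k (top2 A l e m n j k s t));
            zf = (\<lambda>e. mkvec m n (\<lambda>i.
                   if t \<le> s then
                     (if i \<le> t - 1 then a * v1 / l else if i \<le> s then c / (e * l) else c / l)
                   else
                     (if i \<le> s then a * v1 / l else if i \<le> t - 1 then e * a * v1 / l else c / l)) v);
            Q = (\<lambda>e. Bf e $$ (s - 1, t - 1) * zf e $ (s - 1)
                   + (\<Sum>i = 1..n - k. Bf e $$ (m + k + i - 1, t - 1) * zf e $ (m + k + i - 1)));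
            B = Bf eps; z = zf eps in
        simple_eigenvalue B l \<and> B *\<^sub>v w = l \<cdot>\<^sub>v w \<and> transpose_mat B *\<^sub>v z = l \<cdot>\<^sub>v z
        \<and> algebraically_positive B
        \<and> Q eps = (if t \<le> s then c / eps - a * v1 else c - eps * a * v1)
        \<and> (\<exists>e. 0 < e \<and> e < 1 \<and> Q e > 0))
   \<and>
     (\<forall>t\<in>{1..m}.
        let Bf = (\<lambda>e. mkB A m n j k (top3 A l e m n j k t));
            zf = (\<lambda>e. mkvec m n (\<lambda>i. if i \<le> t - 1 then a * v1 / l else c / (e * l)) v);
            Q = (\<lambda>e. Bf e $$ (m - 1, t - 1) * zf e $ (m - 1)
                   + (\<Sum>i = 1..n - k. Bf e $$ (m + k + i - 1, t - 1) * zf e $ (m + k + i - 1)));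
            B = Bf eps; z = zf eps in
        simple_eigenvalue B l \<and> B *\<^sub>v w = l \<cdot>\<^sub>v w \<and> transpose_mat B *\<^sub>v z = l \<cdot>\<^sub>v z
        \<and> algebraically_positive B
        \<and> Q eps = c / eps - a * v1
        \<and> (\<exists>e. 0 < e \<and> e < 1 \<and> Q e > 0)))"
  proof -
  let ?a = "A $$ (0, j - 1) * v $ 0"
  have cS: "c = A $$ (0, j - 1) * v $ 0 + (\<Sum>i<n. if k \<le> i then A $$ (i, j - 1) * v $ i else 0)"
    using sum_reidx[OF k(1), of "\<lambda>i. A $$ (i, j - 1) * v $ i" n] unfolding c_def by simp
  note P1 = part1[OF nm A j a1j lpos simple u v k cS cpos]
  note P2 = part2[OF nm A j a1j lpos simple u v k cS cpos]
  note P3 = part3[OF nm A j a1j lpos simple u v k cS cpos]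
  have apos: "?a > 0" using a1j v nm by auto
  define e0 where "e0 = c / (c + ?a)"
  have e0: "0 < e0" "e0 < 1" unfolding e0_def using cpos apos by (auto simp: field_simps)
  have q1: "c / e0 - ?a > 0" unfolding e0_def using cpos apos by (simp add: field_simps)
  have q2: "c - e0 * ?a > 0"
  proof -
    have "c - e0 * ?a = c * c / (c + ?a)" unfolding e0_def using cpos apos by (simp add: field_simps)
    thus ?thesis using cpos apos by simp
  qed
  show ?thesis unfolding Let_def
    apply (intro conjI ballI)
    subgoal for s using P1[of s] by auto
    subgoal for s using P1[of s] by auto
    subgoal for s using P1[of s] by auto
    subgoal for s using P1[of s] by auto
    subgoal for s t using P2[of s t eps] eps by auto
    subgoal for s t using P2[of s t eps] eps by auto
    subgoal for s t using P2[of s t eps] eps by auto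
    subgoal for s t using P2[of s t eps] eps by auto
    subgoal for s t using P2[of s t eps] eps by auto
    subgoal for s t using P2[of s t e0] e0 q1 q2 by (intro exI[of _ e0]) auto
    subgoal for t using P3[of t eps] eps by auto
    subgoal for t using P3[of t eps] eps by auto
    subgoal for t using P3[of t eps] eps by auto
    subgoal for t using P3[of t eps] eps by auto
    subgoal for t using P3[of t eps] eps by auto
    subgoal for t using P3[of t e0] e0 q1 by (intro exI[of _ e0]) auto
    done
qed

end
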